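(* Let $n$ nodes run the algorithm TLCB described in the context. Suppose $0<t_r\le n-f$, $0<t_s\le t_r$, and $0<t_b\le n-f_b$ where $f_b=t_r(n-t_r)/(t_r-t_s+1)$, and at most $f$ nodes fail. Then TLCB (with the $k$-th call to TLCB on a node constituting that node's $k$-th logical time-step) implements a $\mathrm{TSB}(t_r,t_b,t_s)$ partial-spread broadcast abstraction.
   Context: Asynchronous network model. There are $n$ nodes numbered $1,\dots,n$; nodes may fail only by crashing permanently, after which they send no messages. A network-level Broadcast sends a message to all $n$ nodes (including the sender). Every message sent to a node that does not fail is eventually delivered after an arbitrary finite delay, and messages between each pair of nodes are delivered in the order sent. $\mathrm{Receive}()$ waits for and returns the next delivered message. Algorithm TLCR (node $i$, receive threshold $t_r$). Persistent state: a list $\vec R$ of sets, initially $[\{\}]$; $\vec R_k$ is its $k$-th element. On a call $\mathrm{TLCR}(m)$: append $\{\}$ to $\vec R$ and let $s=|\vec R|$; network-broadcast $\langle i,m,s,\vec R_{s-1}\rangle$; while $|\vec R_s|<t_r$: receive $\langle j,m',s',R'\rangle$; if $s'=s$, add $\langle j,m'\rangle$ to $\vec R_s$; else if $s'>s$, set $\vec R_s\leftarrow\vec R_s\cup R'$ (messages with $s'<s$ are ignored). Return $(\{m'\mid\langle j,m'\rangle\in\vec R_s\},\{\})$. Algorithm TLCB (node $i$, thresholds $t_r$, $t_s\le t_r$), built on TLCR with receive threshold $t_r$. On a call $\mathrm{TLCB}(m)$: $(R',\_)\leftarrow\mathrm{TLCR}(m)$; $(R'',\_)\leftarrow\mathrm{TLCR}(R')$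 (so $R''$ is a set of message-sets); $R\leftarrow R'\cup\bigcup_{X\in R''}X$; $B\leftarrow\{m'\mid$ at least $t_s$ of the message-sets in $R''$ contain $m'\}$; return $(R,B)$. Thus each TLCB step uses two TLCR steps. Threshold synchronous broadcast. A primitive, called once per logical time-step by each non-failed node with a message $m$ and returning a pair $(R,B)$ of message sets, provides $\mathrm{TSB}(t_r,t_b,t_s)$ if: (lock-step synchrony) a call at step $s$ returns (completing step $s$) unless the node fails first; (receive threshold) if node $i$'s call at step $s$ returns $(R,B)$, there is $N_R\subseteq\{1,\dots,n\}$ with $|N_R|\ge t_r$ such that $R$ is exactly the set of messages broadcast by the nodes of $N_R$ in step $s$; (broadcast threshold) there is $N_B\subseteq\{1,\dots,n\}$ with $|N_B|\ge t_b$ such that $B$ is exactly the set of messages broadcast by the nodes of $N_B$ in step $s$; (spread threshold) each $m'\in B$ returned to any node at step $s$ is contained in the receive sets $R$ returned in step $s$ to at least $t_s$ nodes (counting nodes that fail before completing step $s$ but would otherwise have received $m'$). *)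

theory Defs
  imports Main "HOL.Real"
begin

text \<open>Every application message broadcast by TLCB is tagged
  with its sender (as TLCR stores pairs of sender and message), so receive sets are sets of
  pairs (sender, message). Payloads of TLCR steps are either a base message (first TLCR step
  of a TLCB step) or a tagged message set (second TLCR step).\<close>

datatype 'm payload = Base 'm | MSet "(nat \<times> 'm) set"

text \<open>Network message: sender j, payload, TLCR step number s', and the sender's set R_(s'-1).\<close>
type_synonym 'm netmsg = "nat \<times> 'm payload \<times> nat \<times> (nat \<times> 'm payload) set"

datatype 'm phase = Idle | Wait1 | Wait2 "(nat \<times> 'm) set"

record 'm nstate =
  Rv      :: "nat \<Rightarrow> (nat \<times> 'm payload) set"   \<comment> \<open>R_k, 1-indexed\<close>
  len     :: nat                                 \<comment> \<open>length of the list R\<close>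
  ph      :: "'m phase"
  kstep   :: nat                                 \<comment> \<open>number of TLCB calls made\<close>
  inp     :: "nat \<Rightarrow> 'm option"                 \<comment> \<open>message of the k-th TLCB call\<close>
  out     :: "nat \<Rightarrow> ((nat \<times> 'm) set \<times> (nat \<times> 'm) set) option" \<comment> \<open>result of k-th call\<close>
  crashed :: bool

record 'm gstate =
  nd   :: "nat \<Rightarrow> 'm nstate"
  chan :: "nat \<Rightarrow> nat \<Rightarrow> 'm netmsg list"          \<comment> \<open>chan j i: FIFO queue from j to i\<close>

datatype 'm event = Call nat 'm | Recv nat nat | Complete nat | Crash nat | Skip

definition init_node :: "'m nstate" where
  "init_node = \<lparr>Rv = (\<lambda>_. {}), len = 1, ph = Idle, kstep = 0, inp = (\<lambda>_. None),
                 out = (\<lambda>_. None), crashed = False\<rparr>"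

definition init_state :: "'m gstate" where
  "init_state = \<lparr>nd = (\<lambda>_. init_node), chan = (\<lambda>_ _. [])\<rparr>"

definition tlcr_start :: "nat \<Rightarrow> nat \<Rightarrow> 'm payload \<Rightarrow> 'm gstate \<Rightarrow> 'm gstate" where
  "tlcr_start n i p g =
     (let ns = nd g i; s = Suc (len ns);
          msg = (i, p, s, Rv ns (len ns));
          ns' = ns\<lparr>len := s, Rv := (Rv ns)(s := {})\<rparr>
      in g\<lparr>nd := (nd g)(i := ns'),
           chan := (\<lambda>a b. if a = i \<and> b \<in> {1..n} then chan g a b @ [msg] else chan g a b)\<rparr>)"

definition recv_update :: "'m netmsg \<Rightarrow> 'm nstate \<Rightarrow> 'm nstate" where
  "recv_update msg ns =
     (case msg of (j, p, s', R') \<Rightarrow>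
        let s = len ns in
        if s' = s then ns\<lparr>Rv := (Rv ns)(s := Rv ns s \<union> {(j, p)})\<rparr>
        else if s < s' then ns\<lparr>Rv := (Rv ns)(s := Rv ns s \<union> R')\<rparr>
        else ns)"

definition cur_R :: "'m nstate \<Rightarrow> (nat \<times> 'm payload) set" where
  "cur_R ns = Rv ns (len ns)"

definition enabled :: "nat \<Rightarrow> nat \<Rightarrow> 'm gstate \<Rightarrow> 'm event \<Rightarrow> bool" where
  "enabled n tr g e = (case e of
      Call i m \<Rightarrow> i \<in> {1..n} \<and> \<not> crashed (nd g i) \<and> ph (nd g i) = Idle
    | Recv i j \<Rightarrow> i \<in> {1..n} \<and> j \<in> {1..n} \<and> \<not> crashed (nd g i) \<and> ph (nd g i) \<noteq> Idle
                  \<and> card (cur_R (nd g i)) < tr \<and> chan g j i \<noteq> []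
    | Complete i \<Rightarrow> i \<in> {1..n} \<and> \<not> crashed (nd g i) \<and> ph (nd g i) \<noteq> Idle
                  \<and> tr \<le> card (cur_R (nd g i))
    | Crash i \<Rightarrow> i \<in> {1..n} \<and> \<not> crashed (nd g i)
    | Skip \<Rightarrow> True)"

text \<open>Effect of an (enabled) event. A TLCB call with message m starts TLCR(m); when the first
  TLCR returns R', TLCR(R') is started; when that returns R'', TLCB returns (R,B).\<close>
definition gstep :: "nat \<Rightarrow> nat \<Rightarrow> 'm gstate \<Rightarrow> 'm event \<Rightarrow> 'm gstate" where
  "gstep n ts g e = (case e of
      Call i m \<Rightarrow>
        (let ns = nd g i; k = Suc (kstep ns);
             ns' = ns\<lparr>kstep := k, inp := (inp ns)(k := Some m), ph := Wait1\<rparr>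
         in tlcr_start n i (Base m) (g\<lparr>nd := (nd g)(i := ns')\<rparr>))
    | Recv i j \<Rightarrow>
        g\<lparr>nd := (nd g)(i := recv_update (hd (chan g j i)) (nd g i)),
          chan := (chan g)(j := (chan g j)(i := tl (chan g j i)))\<rparr>
    | Complete i \<Rightarrow>
        (let ns = nd g i; Rs = cur_R ns in
         case ph ns of
           Wait1 \<Rightarrow>
             (let R1 = {(j, m). (j, Base m) \<in> Rs}
              in tlcr_start n i (MSet R1) (g\<lparr>nd := (nd g)(i := ns\<lparr>ph := Wait2 R1\<rparr>)\<rparr>))
         | Wait2 R1 \<Rightarrow>
             (let R2 = {(j, X). (j, MSet X) \<in> Rs};
                  R = R1 \<union> (\<Union>(j, X)\<in>R2. X);
                  B = {x. ts \<le> card {(j, X). (j, X) \<in> R2 \<and> x \<in> X}}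
              in g\<lparr>nd := (nd g)(i := ns\<lparr>ph := Idle,
                                         out := (out ns)(kstep ns := Some (R, B))\<rparr>)\<rparr>)
         | Idle \<Rightarrow> g)
    | Crash i \<Rightarrow> g\<lparr>nd := (nd g)(i := (nd g i)\<lparr>crashed := True\<rparr>)\<rparr>
    | Skip \<Rightarrow> g)"

definition run :: "nat \<Rightarrow> nat \<Rightarrow> nat \<Rightarrow> (nat \<Rightarrow> 'm gstate) \<Rightarrow> (nat \<Rightarrow> 'm event) \<Rightarrow> bool" where
  "run n tr ts st ev \<longleftrightarrow> st 0 = init_state \<and>
     (\<forall>t. enabled n tr (st t) (ev t) \<and> st (Suc t) = gstep n ts (st t) (ev t))"

definition weakly_fair ::
  "nat \<Rightarrow> 'm event set \<Rightarrow> (nat \<Rightarrow> 'm gstate) \<Rightarrow> (nat \<Rightarrow> 'm event) \<Rightarrow> nat \<Rightarrow> bool" where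
  "weakly_fair tr P st ev n \<longleftrightarrow>
     (\<forall>t0. \<exists>t\<ge>t0. (\<forall>e\<in>P. \<not> enabled n tr (st t) e) \<or> ev t \<in> P)"

definition fair :: "nat \<Rightarrow> nat \<Rightarrow> (nat \<Rightarrow> 'm gstate) \<Rightarrow> (nat \<Rightarrow> 'm event) \<Rightarrow> bool" where
  "fair n tr st ev \<longleftrightarrow> (\<forall>i\<in>{1..n}.
      weakly_fair tr {Call i m | m. True} st ev n \<and>
      weakly_fair tr {Complete i} st ev n \<and>
      (\<forall>j\<in>{1..n}. weakly_fair tr {Recv i j} st ev n))"

definition failed :: "(nat \<Rightarrow> 'm gstate) \<Rightarrow> nat \<Rightarrow> bool" where
  "failed st i \<longleftrightarrow> (\<exists>t. crashed (nd (st t) i))"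

definition bcast :: "(nat \<Rightarrow> 'm gstate) \<Rightarrow> nat \<Rightarrow> nat \<Rightarrow> 'm \<Rightarrow> bool" where
  "bcast st j s m \<longleftrightarrow> (\<exists>t. inp (nd (st t) j) s = Some m)"

definition called :: "(nat \<Rightarrow> 'm gstate) \<Rightarrow> nat \<Rightarrow> nat \<Rightarrow> bool" where
  "called st j s \<longleftrightarrow> (\<exists>m. bcast st j s m)"

definition msgs_of :: "(nat \<Rightarrow> 'm gstate) \<Rightarrow> nat set \<Rightarrow> nat \<Rightarrow> (nat \<times> 'm) set" where
  "msgs_of st N s = {(j, m). j \<in> N \<and> bcast st j s m}"

definition returns ::
  "(nat \<Rightarrow> 'm gstate) \<Rightarrow> nat \<Rightarrow> nat \<Rightarrow> (nat \<times> 'm) set \<Rightarrow> (nat \<times> 'm) set \<Rightarrow> bool" where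
  "returns st i s R B \<longleftrightarrow> (\<exists>t. out (nd (st t) i) s = Some (R, B))"

text \<open>Node j receives (or, if it fails before completing step s, would otherwise have
  received) x in step s: in every execution that coincides with the given one as long as j
  has not crashed, whenever j completes step s its receive set contains x.\<close>
definition would_receive ::
  "nat \<Rightarrow> nat \<Rightarrow> nat \<Rightarrow> (nat \<Rightarrow> 'm gstate) \<Rightarrow> nat \<Rightarrow> nat \<Rightarrow> nat \<times> 'm \<Rightarrow> bool" where
  "would_receive n tr ts st j s x \<longleftrightarrow>
     (\<forall>st' ev'. run n tr ts st' ev' \<longrightarrow>
        (\<forall>t. \<not> crashed (nd (st t) j) \<longrightarrow> st' t = st t) \<longrightarrow>
        (\<forall>R B. returns st' j s R B \<longrightarrow> x \<in> R))"

text \<open>TSB(t_r, t_b, t_s) for the execution st (step s is the s-th TLCB call, s \<ge> 1).\<close>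
definition TSB :: "nat \<Rightarrow> nat \<Rightarrow> nat \<Rightarrow> nat \<Rightarrow> (nat \<Rightarrow> 'm gstate) \<Rightarrow> bool" where
  "TSB n tr tb ts st \<longleftrightarrow>
     \<comment> \<open>lock-step synchrony\<close>
     (\<forall>i\<in>{1..n}. \<forall>s. called st i s \<longrightarrow> (\<exists>R B. returns st i s R B) \<or> failed st i) \<and>
     \<comment> \<open>receive threshold\<close>
     (\<forall>i s R B. returns st i s R B \<longrightarrow>
        (\<exists>NR\<subseteq>{1..n}. tr \<le> card NR \<and> (\<forall>j\<in>NR. called st j s) \<and> R = msgs_of st NR s)) \<and>
     \<comment> \<open>broadcast threshold\<close>
     (\<forall>i s R B. returns st i s R B \<longrightarrow>
        (\<exists>NB\<subseteq>{1..n}. tb \<le> card NB \<and> (\<forall>j\<in>NB. called st j s) \<and> B = msgs_of st NB s)) \<and>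
     \<comment> \<open>spread threshold\<close>
     (\<forall>i s R B x. returns st i s R B \<and> x \<in> B \<longrightarrow>
        (\<exists>NS\<subseteq>{1..n}. ts \<le> card NS \<and> (\<forall>j\<in>NS. would_receive n tr ts st j s x)))"

end

theory Submission imports Defs Complex_Main begin

declare upt_Suc[simp del]

definition R1of :: "(nat \<times> 'm payload) set \<Rightarrow> (nat \<times> 'm) set" where
  "R1of Rs = {(j, m). (j, Base m) \<in> Rs}"
definition R2of :: "(nat \<times> 'm payload) set \<Rightarrow> (nat \<times> (nat \<times> 'm) set) set" where
  "R2of Rs = {(j, X). (j, MSet X) \<in> Rs}"
definition Bfun :: "nat \<Rightarrow> (nat \<times> 'm payload) set \<Rightarrow> (nat \<times> 'm) set" where
  "Bfun ts C = {x. ts \<le> card {(j, X). (j, X) \<in> R2of C \<and> x \<in> X}}"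
definition Rfun :: "(nat \<times> 'm payload) set \<Rightarrow> (nat \<times> 'm payload) set \<Rightarrow> (nat \<times> 'm) set" where
  "Rfun A C = R1of A \<union> (\<Union>(j, X)\<in>R2of C. X)"
definition pay :: "'m nstate \<Rightarrow> nat \<Rightarrow> 'm payload" where
  "pay ns q = (if even q then Base (the (inp ns (q div 2))) else MSet (R1of (Rv ns (q - 1))))"
definition msg :: "nat \<Rightarrow> 'm nstate \<Rightarrow> nat \<Rightarrow> 'm netmsg" where
  "msg j ns q = (j, pay ns q, q, Rv ns (q - 1))"

definition NInv :: "nat \<Rightarrow> nat \<Rightarrow> 'm nstate \<Rightarrow> bool" where
  "NInv tr ts ns \<longleftrightarrow>
   ((ph ns = Idle \<and> len ns = 2 * kstep ns + 1) \<or> (ph ns = Wait1 \<and> len ns = 2 * kstep ns \<and> 1 \<le> kstep ns) \<or>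
    (ph ns = Wait2 (R1of (Rv ns (2 * kstep ns))) \<and> len ns = 2 * kstep ns + 1 \<and> 1 \<le> kstep ns)) \<and>
   (\<forall>c. (inp ns c \<noteq> None) = (1 \<le> c \<and> c \<le> kstep ns)) \<and>
   (\<forall>c. (out ns c \<noteq> None) = (1 \<le> c \<and> (c < kstep ns \<or> (c = kstep ns \<and> ph ns = Idle)))) \<and>
   (\<forall>c R B. out ns c = Some (R, B) \<longrightarrow> R = Rfun (Rv ns (2*c)) (Rv ns (2*c+1)) \<and> B = Bfun ts (Rv ns (2*c+1))) \<and>
   (\<forall>q. (q \<le> 1 \<or> len ns < q) \<longrightarrow> Rv ns q = {}) \<and>
   (\<forall>q. 2 \<le> q \<and> (q < len ns \<or> (q = len ns \<and> ph ns = Idle)) \<longrightarrow> tr \<le> card (Rv ns q))"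

definition ext :: "'m nstate \<Rightarrow> 'm nstate \<Rightarrow> bool" where
  "ext a b \<longleftrightarrow> len a \<le> len b \<and> kstep a \<le> kstep b \<and> (\<forall>q < len a. Rv b q = Rv a q) \<and>
     (\<forall>q. Rv a q \<subseteq> Rv b q) \<and> (\<forall>c \<le> kstep a. inp b c = inp a c) \<and> (crashed a \<longrightarrow> crashed b)"

lemma ext_refl: "ext a a" by (simp add: ext_def)
lemma ext_trans: "ext a b \<Longrightarrow> ext b c \<Longrightarrow> ext a c"
  unfolding ext_def by (metis order_trans less_le_trans subset_trans)

lemma nd_Call: "nd (gstep n ts g (Call i m)) k = (if k = i then (nd g i)\<lparr>kstep := Suc (kstep (nd g i)), inp := (inp (nd g i))(Suc (kstep (nd g i)) := Some m), ph := Wait1, len := Suc (len (nd g i)), Rv := (Rv (nd g i))(Suc (len (nd g i)) := {})\<rparr> else nd g k)"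
  by (simp add: gstep_def tlcr_start_def Let_def)

lemma chan_Call: "chan (gstep n ts g (Call i m)) a b = (if a = i \<and> b \<in> {1..n} then chan g a b @ [(i, Base m, Suc (len (nd g i)), Rv (nd g i) (len (nd g i)))] else chan g a b)"
  by (simp add: gstep_def tlcr_start_def Let_def)

lemma nd_Recv: "nd (gstep n ts g (Recv i j)) k = (if k = i then recv_update (hd (chan g j i)) (nd g i) else nd g k)"
  by (simp add: gstep_def)

lemma chan_Recv: "chan (gstep n ts g (Recv i j)) a b = (if a = j \<and> b = i then tl (chan g j i) else chan g a b)"
  by (simp add: gstep_def)

lemma nd_Complete1: "ph (nd g i) = Wait1 \<Longrightarrow> nd (gstep n ts g (Complete i)) k = (if k = i then (nd g i)\<lparr>ph := Wait2 (R1of (cur_R (nd g i))), len := Suc (len (nd g i)), Rv := (Rv (nd g i))(Suc (len (nd g i)) := {})\<rparr> else nd g k)"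
  by (simp add: gstep_def tlcr_start_def Let_def R1of_def)

lemma chan_Complete1: "ph (nd g i) = Wait1 \<Longrightarrow> chan (gstep n ts g (Complete i)) a b = (if a = i \<and> b \<in> {1..n} then chan g a b @ [(i, MSet (R1of (cur_R (nd g i))), Suc (len (nd g i)), Rv (nd g i) (len (nd g i)))] else chan g a b)"
  by (simp add: gstep_def tlcr_start_def Let_def R1of_def)

lemma nd_Complete2: "ph (nd g i) = Wait2 X \<Longrightarrow> nd (gstep n ts g (Complete i)) k = (if k = i then (nd g i)\<lparr>ph := Idle, out := (out (nd g i))(kstep (nd g i) := Some (X \<union> (\<Union>(j, Y)\<in>R2of (cur_R (nd g i)). Y), Bfun ts (cur_R (nd g i))))\<rparr> else nd g k)"
  by (simp add: gstep_def Let_def R2of_def Bfun_def)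

lemma chan_Complete2: "ph (nd g i) = Wait2 X \<Longrightarrow> chan (gstep n ts g (Complete i)) = chan g"
  by (simp add: gstep_def Let_def)

lemma nd_Crash: "nd (gstep n ts g (Crash i)) k = (if k = i then (nd g i)\<lparr>crashed := True\<rparr> else nd g k)"
  by (simp add: gstep_def)
lemma chan_Crash: "chan (gstep n ts g (Crash i)) = chan g"
  by (simp add: gstep_def)

lemma ru_len[simp]: "len (recv_update x ns) = len ns"
  and ru_kstep[simp]: "kstep (recv_update x ns) = kstep ns"
  and ru_ph[simp]: "ph (recv_update x ns) = ph ns"
  and ru_inp[simp]: "inp (recv_update x ns) = inp ns"
  and ru_out[simp]: "out (recv_update x ns) = out ns"
  and ru_crashed[simp]: "crashed (recv_update x ns) = crashed ns"
  by (cases x; auto simp: recv_update_def Let_def)+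

lemma ru_Rv: "Rv (recv_update (j, p, s', R') ns) q =
   (if q = len ns \<and> s' = len ns then Rv ns q \<union> {(j, p)} else if q = len ns \<and> len ns < s' then Rv ns q \<union> R' else Rv ns q)"
  by (auto simp: recv_update_def Let_def)

lemma ru_Rv_other: "q \<noteq> len ns \<Longrightarrow> Rv (recv_update x ns) q = Rv ns q"
  by (cases x) (auto simp: ru_Rv)

lemma ru_Rv_mono: "Rv ns q \<subseteq> Rv (recv_update x ns) q"
  by (cases x) (auto simp: ru_Rv)

lemma NInvD:
  assumes "NInv tr ts ns"
  shows "(ph ns = Idle \<and> len ns = 2 * kstep ns + 1) \<or> (ph ns = Wait1 \<and> len ns = 2 * kstep ns \<and> 1 \<le> kstep ns) \<or>
    (ph ns = Wait2 (R1of (Rv ns (2 * kstep ns))) \<and> len ns = 2 * kstep ns + 1 \<and> 1 \<le> kstep ns)"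
    and "\<And>c. (inp ns c \<noteq> None) = (1 \<le> c \<and> c \<le> kstep ns)"
    and "\<And>c. (out ns c \<noteq> None) = (1 \<le> c \<and> (c < kstep ns \<or> (c = kstep ns \<and> ph ns = Idle)))"
    and "\<And>c R B. out ns c = Some (R, B) \<Longrightarrow> R = Rfun (Rv ns (2*c)) (Rv ns (2*c+1)) \<and> B = Bfun ts (Rv ns (2*c+1))"
    and "\<And>q. q \<le> 1 \<or> len ns < q \<Longrightarrow> Rv ns q = {}"
    and "\<And>q. 2 \<le> q \<Longrightarrow> q < len ns \<or> (q = len ns \<and> ph ns = Idle) \<Longrightarrow> tr \<le> card (Rv ns q)"
  using assms unfolding NInv_def by (simp_all, metis)

lemma NInvI:
  assumes "(ph ns = Idle \<and> len ns = 2 * kstep ns + 1) \<or> (ph ns = Wait1 \<and> len ns = 2 * kstep ns \<and> 1 \<le> kstep ns) \<or>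
    (ph ns = Wait2 (R1of (Rv ns (2 * kstep ns))) \<and> len ns = 2 * kstep ns + 1 \<and> 1 \<le> kstep ns)"
    and "\<And>c. (inp ns c \<noteq> None) = (1 \<le> c \<and> c \<le> kstep ns)"
    and "\<And>c. (out ns c \<noteq> None) = (1 \<le> c \<and> (c < kstep ns \<or> (c = kstep ns \<and> ph ns = Idle)))"
    and "\<And>c R B. out ns c = Some (R, B) \<Longrightarrow> R = Rfun (Rv ns (2*c)) (Rv ns (2*c+1)) \<and> B = Bfun ts (Rv ns (2*c+1))"
    and "\<And>q. q \<le> 1 \<or> len ns < q \<Longrightarrow> Rv ns q = {}"
    and "\<And>q. 2 \<le> q \<Longrightarrow> q < len ns \<or> (q = len ns \<and> ph ns = Idle) \<Longrightarrow> tr \<le> card (Rv ns q)"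
  shows "NInv tr ts ns"
  unfolding NInv_def apply (intro conjI allI impI)
  using assms by simp_all

lemma NInv_Call:
  assumes I: "NInv tr ts ns" and idle: "ph ns = Idle"
  shows "NInv tr ts (ns\<lparr>kstep := Suc (kstep ns), inp := (inp ns)(Suc (kstep ns) := Some m), ph := Wait1, len := Suc (len ns), Rv := (Rv ns)(Suc (len ns) := {})\<rparr>)"
proof -
  have L: "len ns = 2 * kstep ns + 1" using NInvD(1)[OF I] idle by auto
  show ?thesis
  proof (rule NInvI, goal_cases)
    case 1 then show ?case using L by simp
  next
    case (2 c) then show ?case using NInvD(2)[OF I, of c] by auto
  next
    case (3 c) then show ?case using NInvD(3)[OF I, of c] idle by auto
  next
    case (4 c R B)
    then have "out ns c = Some (R, B)" by simp
    moreover then have "c \<le> kstep ns" using NInvD(3)[OF I, of c] by auto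
    ultimately show ?case using NInvD(4)[OF I, of c R B] L by simp
  next
    case (5 q) then show ?case using NInvD(5)[OF I, of q] by auto
  next
    case (6 q) then show ?case using NInvD(6)[OF I, of q] idle by (auto simp: less_Suc_eq)
  qed
qed

lemma NInv_Recv:
  assumes I: "NInv tr ts ns" and nidle: "ph ns \<noteq> Idle"
  shows "NInv tr ts (recv_update x ns)"
proof -
  have L: "2 * kstep ns \<le> len ns" "len ns \<le> 2 * kstep ns + 1" using NInvD(1)[OF I] nidle by auto
  show ?thesis
  proof (rule NInvI, goal_cases)
    case 1 then show ?case using NInvD(1)[OF I] nidle L by (auto simp: ru_Rv_other)
  next
    case (2 c) then show ?case using NInvD(2)[OF I, of c] by auto
  next
    case (3 c) then show ?case using NInvD(3)[OF I, of c] by auto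
  next
    case (4 c R B)
    then have "out ns c = Some (R, B)" by simp
    moreover then have "c < kstep ns" using NInvD(3)[OF I, of c] nidle by auto
    ultimately show ?case using NInvD(4)[OF I, of c R B] L by (simp add: ru_Rv_other)
  next
    case (5 q)
    have "2 \<le> len ns" using NInvD(1)[OF I] nidle by auto
    with 5 have "q \<noteq> len ns" by auto
    then show ?case using 5 NInvD(5)[OF I, of q] by (simp add: ru_Rv_other)
  next
    case (6 q) then show ?case using NInvD(6)[OF I, of q] nidle by (auto simp: ru_Rv_other)
  qed
qed

lemma NInv_Complete1:
  assumes I: "NInv tr ts ns" and w: "ph ns = Wait1" and c: "tr \<le> card (cur_R ns)"
  shows "NInv tr ts (ns\<lparr>ph := Wait2 (R1of (cur_R ns)), len := Suc (len ns), Rv := (Rv ns)(Suc (len ns) := {})\<rparr>)"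
proof -
  have L: "len ns = 2 * kstep ns" "1 \<le> kstep ns" using NInvD(1)[OF I] w by auto
  show ?thesis
  proof (rule NInvI, goal_cases)
    case 1 then show ?case using L by (simp add: cur_R_def)
  next
    case (2 c) then show ?case using NInvD(2)[OF I, of c] by auto
  next
    case (3 c) then show ?case using NInvD(3)[OF I, of c] w by auto
  next
    case (4 c R B)
    then have "out ns c = Some (R, B)" by simp
    moreover then have "c < kstep ns" using NInvD(3)[OF I, of c] w by auto
    ultimately show ?case using NInvD(4)[OF I, of c R B] L by simp
  next
    case (5 q) then show ?case using NInvD(5)[OF I, of q] by auto
  next
    case (6 q) then show ?case using NInvD(6)[OF I, of q] c w by (auto simp: less_Suc_eq cur_R_def)
  qed
qed

lemma NInv_Complete2:
  assumes I: "NInv tr ts ns" and w: "ph ns = Wait2 X" and c: "tr \<le> card (cur_R ns)"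
  shows "NInv tr ts (ns\<lparr>ph := Idle, out := (out ns)(kstep ns := Some (X \<union> (\<Union>(j, Y)\<in>R2of (cur_R ns). Y), Bfun ts (cur_R ns)))\<rparr>)"
proof -
  have L: "len ns = 2 * kstep ns + 1" "1 \<le> kstep ns" "X = R1of (Rv ns (2 * kstep ns))" using NInvD(1)[OF I] w by auto
  show ?thesis
  proof (rule NInvI, goal_cases)
    case 1 then show ?case using L by simp
  next
    case (2 c) then show ?case using NInvD(2)[OF I, of c] by auto
  next
    case (3 c) then show ?case using NInvD(3)[OF I, of c] w L by auto
  next
    case (4 c R B)
    show ?case
    proof (cases "c = kstep ns")
      case True then show ?thesis using 4 L by (auto simp: Rfun_def cur_R_def)
    next
      case False then show ?thesis using 4 NInvD(4)[OF I, of c R B] by simp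
    qed
  next
    case (5 q) then show ?case using NInvD(5)[OF I, of q] by auto
  next
    case (6 q) then show ?case using NInvD(6)[OF I, of q] c w by (auto simp: cur_R_def)
  qed
qed

lemma NInv_step:
  assumes inv: "\<forall>k. NInv tr ts (nd g k)" and en: "enabled n tr g e"
  shows "NInv tr ts (nd (gstep n ts g e) k)"
proof (cases e)
  case (Call i m)
  then show ?thesis using inv en NInv_Call[of tr ts "nd g i" m] by (auto simp: nd_Call enabled_def)
next
  case (Recv i j)
  then show ?thesis using inv en NInv_Recv[of tr ts "nd g i"] by (auto simp: nd_Recv enabled_def)
next
  case (Complete i)
  show ?thesis
  proof (cases "ph (nd g i)")
    case Idle then show ?thesis using en Complete by (simp add: enabled_def)
  next
    case Wait1 then show ?thesis using inv en Complete NInv_Complete1[of tr ts "nd g i"]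
      by (auto simp: nd_Complete1 enabled_def)
  next
    case (Wait2 X) then show ?thesis using inv en Complete NInv_Complete2[of tr ts "nd g i" X]
      by (auto simp: nd_Complete2 enabled_def)
  qed
next
  case (Crash i)
  have "NInv tr ts ((nd g i)\<lparr>crashed := True\<rparr>)" using inv[rule_format, of i] unfolding NInv_def by simp
  then show ?thesis using inv Crash by (auto simp: nd_Crash)
next
  case Skip
  then show ?thesis using inv by (simp add: gstep_def)
qed

lemma NInv_len: "NInv tr ts ns \<Longrightarrow> 2 * kstep ns \<le> len ns \<and> len ns \<le> 2 * kstep ns + 1 \<and> 1 \<le> len ns"
  using NInvD(1)[of tr ts ns] by auto

lemma NInv_nidle: "NInv tr ts ns \<Longrightarrow> ph ns \<noteq> Idle \<Longrightarrow> 2 \<le> len ns \<and> 1 \<le> kstep ns"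
  using NInvD(1)[of tr ts ns] by auto

lemma ext_step:
  assumes inv: "\<forall>k. NInv tr ts (nd g k)" and en: "enabled n tr g e"
  shows "ext (nd g k) (nd (gstep n ts g e) k)"
proof (cases e)
  case (Call i m)
  have "Rv (nd g i) (Suc (len (nd g i))) = {}" using NInvD(5)[of tr ts "nd g i"] inv by auto
  then show ?thesis using Call by (auto simp: nd_Call ext_def)
next
  case (Recv i j)
  then show ?thesis by (auto simp: nd_Recv ext_def ru_Rv_other ru_Rv_mono)
next
  case (Complete i)
  show ?thesis
  proof (cases "ph (nd g i)")
    case Idle then show ?thesis using en Complete by (simp add: enabled_def)
  next
    case Wait1
    have "Rv (nd g i) (Suc (len (nd g i))) = {}" using NInvD(5)[of tr ts "nd g i"] inv by auto
    then show ?thesis using Complete Wait1 by (auto simp: nd_Complete1 ext_def)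
  next
    case (Wait2 X) then show ?thesis using Complete by (auto simp: nd_Complete2 ext_def)
  qed
next
  case (Crash i)
  then show ?thesis by (auto simp: nd_Crash ext_def)
next
  case Skip
  then show ?thesis by (simp add: gstep_def ext_refl)
qed

lemma pay_ext: "NInv tr ts a \<Longrightarrow> ext a b \<Longrightarrow> q \<le> len a \<Longrightarrow> pay b q = pay a q"
  apply (drule NInv_len)
  apply (auto simp: pay_def ext_def)
  done

lemma msg_ext: "NInv tr ts a \<Longrightarrow> ext a b \<Longrightarrow> q \<le> len a \<Longrightarrow> msg j b q = msg j a q"
proof -
  assume a: "NInv tr ts a" "ext a b" "q \<le> len a"
  have "q - 1 < len a" using a(3) NInv_len[OF a(1)] by linarith
  then have "Rv b (q - 1) = Rv a (q - 1)" using a(2) unfolding ext_def by blast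
  then show ?thesis using pay_ext[OF a] unfolding msg_def by simp
qed

lemma map_msg_ext: assumes "NInv tr ts a" "ext a b" shows "map (msg j b) [x..<Suc (len a)] = map (msg j a) [x..<Suc (len a)]"
proof -
  have "\<And>q. q \<in> set [x..<Suc (len a)] \<Longrightarrow> msg j b q = msg j a q"
  proof -
    fix q assume "q \<in> set [x..<Suc (len a)]"
    then have "q \<le> len a" by simp
    then show "msg j b q = msg j a q" by (rule msg_ext[OF assms])
  qed
  then show ?thesis by simp
qed
definition PInv :: "nat \<Rightarrow> 'm gstate \<Rightarrow> bool" where
  "PInv n g \<longleftrightarrow> (\<forall>i q k p. (k, p) \<in> Rv (nd g i) q \<longrightarrow> k \<in> {1..n} \<and> q \<le> len (nd g k) \<and> p = pay (nd g k) q)"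

definition CInv :: "nat \<Rightarrow> nat \<Rightarrow> 'm gstate \<Rightarrow> bool" where
  "CInv n tr g \<longleftrightarrow> (\<forall>i\<in>{1..n}. \<forall>j\<in>{1..n}. \<exists>p. 1 \<le> p \<and> p \<le> len (nd g j) \<and>
     chan g j i = map (msg j (nd g j)) [Suc p..<Suc (len (nd g j))] \<and>
     (p \<le> len (nd g i) \<or> (p = Suc (len (nd g i)) \<and> tr \<le> card (Rv (nd g i) (len (nd g i))))))"

definition Inv :: "nat \<Rightarrow> nat \<Rightarrow> nat \<Rightarrow> 'm gstate \<Rightarrow> bool" where
  "Inv n tr ts g \<longleftrightarrow> (\<forall>i. NInv tr ts (nd g i)) \<and> PInv n g \<and> CInv n tr g"

lemma PInv_fin: "PInv n g \<Longrightarrow> finite (Rv (nd g i) q)"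
proof -
  assume P: "PInv n g"
  have "Rv (nd g i) q \<subseteq> (\<lambda>k. (k, pay (nd g k) q)) ` {1..n}"
    using P unfolding PInv_def by fastforce
  then show ?thesis by (rule finite_subset) simp
qed

lemma PInv_uniq: "PInv n g \<Longrightarrow> (k, p) \<in> Rv (nd g i) q \<Longrightarrow> (k, p') \<in> Rv (nd g i') q \<Longrightarrow> p = p'"
  unfolding PInv_def by blast

lemma PInv_inj: "PInv n g \<Longrightarrow> inj_on fst (Rv (nd g i) q)"
  unfolding inj_on_def using PInv_uniq by fastforce

lemma PInv_card: "PInv n g \<Longrightarrow> card (fst ` Rv (nd g i) q) = card (Rv (nd g i) q)"
  using PInv_inj card_image by blast

lemma CInvD:
  assumes "CInv n tr g" "i \<in> {1..n}" "j \<in> {1..n}"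
  obtains p where "1 \<le> p" "p \<le> len (nd g j)" "chan g j i = map (msg j (nd g j)) [Suc p..<Suc (len (nd g j))]"
    "p \<le> len (nd g i) \<or> (p = Suc (len (nd g i)) \<and> tr \<le> card (Rv (nd g i) (len (nd g i))))"
  using assms unfolding CInv_def by blast

lemma Recv_head:
  assumes C: "CInv n tr g" and en: "enabled n tr g (Recv i j)"
  obtains p where "1 \<le> p" "p < len (nd g j)" "p \<le> len (nd g i)"
    "chan g j i = map (msg j (nd g j)) [Suc p..<Suc (len (nd g j))]"
    "hd (chan g j i) = msg j (nd g j) (Suc p)"
    "tl (chan g j i) = map (msg j (nd g j)) [Suc (Suc p)..<Suc (len (nd g j))]"
proof -
  have ij: "i \<in> {1..n}" "j \<in> {1..n}" and ne: "chan g j i \<noteq> []" and c: "card (cur_R (nd g i)) < tr"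
    using en by (auto simp: enabled_def)
  obtain p where p: "1 \<le> p" "p \<le> len (nd g j)" "chan g j i = map (msg j (nd g j)) [Suc p..<Suc (len (nd g j))]"
    "p \<le> len (nd g i) \<or> (p = Suc (len (nd g i)) \<and> tr \<le> card (Rv (nd g i) (len (nd g i))))"
    using CInvD[OF C ij] by blast
  have pl: "p \<le> len (nd g i)" using p(4) c by (auto simp: cur_R_def)
  have "p < len (nd g j)" using p(2,3) ne by (cases "p = len (nd g j)") auto
  then have u: "[Suc p..<Suc (len (nd g j))] = Suc p # [Suc (Suc p)..<Suc (len (nd g j))]"
    by (simp add: upt_conv_Cons)
  show ?thesis
    apply (rule that[OF p(1) \<open>p < len (nd g j)\<close> pl p(3)])
    using p(3) u by simp_all
qed

lemma PInv_step:
  assumes I: "Inv n tr ts g" and en: "enabled n tr g e"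
  shows "PInv n (gstep n ts g e)"
proof -
  have N: "\<forall>k. NInv tr ts (nd g k)" and P: "PInv n g" and C: "CInv n tr g" using I by (auto simp: Inv_def)
  have E: "\<And>k. ext (nd g k) (nd (gstep n ts g e) k)" using ext_step[OF N en] by blast
  have old: "k \<in> {1..n} \<and> q \<le> len (nd (gstep n ts g e) k) \<and> p = pay (nd (gstep n ts g e) k) q"
    if "(k, p) \<in> Rv (nd g i) q" for i q k p
  proof -
    have a: "k \<in> {1..n}" "q \<le> len (nd g k)" "p = pay (nd g k) q" using P that unfolding PInv_def by blast+
    show ?thesis using a pay_ext[OF N[rule_format] E a(2)] E[of k] unfolding ext_def by auto
  qed
  show ?thesis unfolding PInv_def
  proof (intro allI impI)
    fix i q k p assume kp: "(k, p) \<in> Rv (nd (gstep n ts g e) i) q"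
    show "k \<in> {1..n} \<and> q \<le> len (nd (gstep n ts g e) k) \<and> p = pay (nd (gstep n ts g e) k) q"
    proof (cases e)
      case (Call a m)
      have "(k, p) \<in> Rv (nd g i) q" using kp Call by (auto simp: nd_Call split: if_splits)
      then show ?thesis by (rule old)
    next
      case (Complete a)
      have "(k, p) \<in> Rv (nd g i) q"
      proof (cases "ph (nd g a)")
        case Idle then show ?thesis using en Complete by (simp add: enabled_def)
      next
        case Wait1 then show ?thesis using kp Complete by (auto simp: nd_Complete1 split: if_splits)
      next
        case (Wait2 X) then show ?thesis using kp Complete by (auto simp: nd_Complete2 split: if_splits)
      qed
      then show ?thesis by (rule old)
    next
      case (Crash a)
      have "(k, p) \<in> Rv (nd g i) q" using kp Crash by (auto simp: nd_Crash split: if_splits)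
      then show ?thesis by (rule old)
    next
      case Skip
      have "(k, p) \<in> Rv (nd g i) q" using kp Skip by (auto simp: gstep_def)
      then show ?thesis by (rule old)
    next
      case (Recv a b)
      show ?thesis
      proof (cases "(k, p) \<in> Rv (nd g i) q")
        case True then show ?thesis by (rule old)
      next
        case False
        have ia: "i = a" using False kp Recv by (auto simp: nd_Recv split: if_splits)
        have en': "enabled n tr g (Recv a b)" using en Recv by simp
        obtain p0 where p0: "1 \<le> p0" "p0 < len (nd g b)" "p0 \<le> len (nd g a)"
          "hd (chan g b a) = msg b (nd g b) (Suc p0)" using Recv_head[OF C en'] by metis
        have b: "b \<in> {1..n}" using en' by (simp add: enabled_def)
        have kp2: "(k, p) \<in> Rv (recv_update (b, pay (nd g b) (Suc p0), Suc p0, Rv (nd g b) p0) (nd g a)) q"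
          using kp Recv ia p0(4) by (simp add: nd_Recv msg_def)
        show ?thesis
        proof (cases "Suc p0 = len (nd g a)")
          case True
          then have "k = b \<and> p = pay (nd g b) (Suc p0) \<and> q = Suc p0" using kp2 False ia by (auto simp: ru_Rv split: if_splits)
          moreover have "pay (nd (gstep n ts g e) b) (Suc p0) = pay (nd g b) (Suc p0)"
            using pay_ext[OF N[rule_format, of b] E[of b]] p0(2) by simp
          ultimately show ?thesis using b p0(2) E[of b] unfolding ext_def by auto
        next
          case F2: False
          then have "(k, p) \<in> Rv (nd g b) p0" and "q = p0" using kp2 False ia p0(3) by (auto simp: ru_Rv split: if_splits)
          then show ?thesis using old by blast
        qed
      qed
    qed
  qed
qed

lemma cond_mono:
  assumes "p \<le> L \<or> (p = Suc L \<and> tr \<le> card A)" "L \<le> L'" "L' = L \<Longrightarrow> A \<subseteq> A' \<and> finite A'"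
  shows "p \<le> L' \<or> (p = Suc L' \<and> tr \<le> card A')"
proof (cases "L' = L")
  case True
  then have "card A \<le> card A'" using assms(3) card_mono by blast
  then show ?thesis using assms(1) True by auto
next
  case False then show ?thesis using assms(1,2) by auto
qed

lemma CInv_step:
  assumes I: "Inv n tr ts g" and en: "enabled n tr g e"
  shows "CInv n tr (gstep n ts g e)"
proof -
  let ?g = "gstep n ts g e"
  have N: "\<forall>k. NInv tr ts (nd g k)" and P: "PInv n g" and C: "CInv n tr g" using I by (auto simp: Inv_def)
  have E: "\<And>k. ext (nd g k) (nd ?g k)" using ext_step[OF N en] by blast
  have P': "PInv n ?g" using PInv_step[OF I en] .
  have cond: "p \<le> len (nd ?g i) \<or> (p = Suc (len (nd ?g i)) \<and> tr \<le> card (Rv (nd ?g i) (len (nd ?g i))))"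
    if "p \<le> len (nd g i) \<or> (p = Suc (len (nd g i)) \<and> tr \<le> card (Rv (nd g i) (len (nd g i))))" for p i
    apply (rule cond_mono[OF that])
    using E[of i] PInv_fin[OF P'] unfolding ext_def by auto
  show ?thesis unfolding CInv_def
  proof (intro ballI)
    fix i j assume ij: "i \<in> {1..n}" "j \<in> {1..n}"
    obtain p0 where p0: "1 \<le> p0" "p0 \<le> len (nd g j)" "chan g j i = map (msg j (nd g j)) [Suc p0..<Suc (len (nd g j))]"
      "p0 \<le> len (nd g i) \<or> (p0 = Suc (len (nd g i)) \<and> tr \<le> card (Rv (nd g i) (len (nd g i))))"
      using CInvD[OF C ij] by blast
    have same: "\<exists>p. 1 \<le> p \<and> p \<le> len (nd ?g j) \<and> chan ?g j i = map (msg j (nd ?g j)) [Suc p..<Suc (len (nd ?g j))] \<and>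
         (p \<le> len (nd ?g i) \<or> (p = Suc (len (nd ?g i)) \<and> tr \<le> card (Rv (nd ?g i) (len (nd ?g i)))))"
      if ch: "chan ?g j i = chan g j i" and lj: "len (nd ?g j) = len (nd g j)"
    proof (intro exI conjI)
      show "1 \<le> p0" "p0 \<le> len (nd ?g j)" using p0 lj by auto
      have "chan ?g j i = map (msg j (nd g j)) [Suc p0..<Suc (len (nd g j))]" using ch p0(3) by simp
      also have "\<dots> = map (msg j (nd ?g j)) [Suc p0..<Suc (len (nd g j))]"
        by (rule map_msg_ext[OF N[rule_format, of j] E[of j], symmetric])
      finally show "chan ?g j i = map (msg j (nd ?g j)) [Suc p0..<Suc (len (nd ?g j))]" using lj by simp
      show "p0 \<le> len (nd ?g i) \<or> (p0 = Suc (len (nd ?g i)) \<and> tr \<le> card (Rv (nd ?g i) (len (nd ?g i))))"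
        by (rule cond[OF p0(4)])
    qed
    show "\<exists>p. 1 \<le> p \<and> p \<le> len (nd ?g j) \<and> chan ?g j i = map (msg j (nd ?g j)) [Suc p..<Suc (len (nd ?g j))] \<and>
         (p \<le> len (nd ?g i) \<or> (p = Suc (len (nd ?g i)) \<and> tr \<le> card (Rv (nd ?g i) (len (nd ?g i)))))"
    proof (cases e)
      case (Call a m)
      show ?thesis
      proof (cases "j = a")
        case False then show ?thesis using Call by (intro same) (auto simp: chan_Call nd_Call)
      next
        case True
        have idle: "ph (nd g a) = Idle" using en Call by (simp add: enabled_def)
        have L: "len (nd g a) = 2 * kstep (nd g a) + 1" using NInvD(1)[OF N[rule_format, of a]] idle by auto
        let ?L = "len (nd g a)"
        have m: "msg a (nd ?g a) (Suc ?L) = (a, Base m, Suc ?L, Rv (nd g a) ?L)"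
          using Call L by (simp add: msg_def pay_def nd_Call)
        have up: "[Suc p0..<Suc (Suc ?L)] = [Suc p0..<Suc ?L] @ [Suc ?L]" using p0(2) True by (simp add: upt_Suc)
        show ?thesis
        proof (intro exI conjI)
          show "1 \<le> p0" "p0 \<le> len (nd ?g j)" using p0 True Call by (auto simp: nd_Call)
          have "chan ?g j i = map (msg a (nd g a)) [Suc p0..<Suc ?L] @ [(a, Base m, Suc ?L, Rv (nd g a) ?L)]"
            using True Call ij p0(3) by (simp add: chan_Call)
          also have "\<dots> = map (msg a (nd ?g a)) [Suc p0..<Suc ?L] @ [msg a (nd ?g a) (Suc ?L)]"
            using map_msg_ext[OF N[rule_format, of a] E[of a], of a "Suc p0"] m by simp
          also have "\<dots> = map (msg a (nd ?g a)) [Suc p0..<Suc (Suc ?L)]" using up by simp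
          finally show "chan ?g j i = map (msg j (nd ?g j)) [Suc p0..<Suc (len (nd ?g j))]"
            using True Call by (simp add: nd_Call)
          show "p0 \<le> len (nd ?g i) \<or> (p0 = Suc (len (nd ?g i)) \<and> tr \<le> card (Rv (nd ?g i) (len (nd ?g i))))"
            by (rule cond[OF p0(4)])
        qed
      qed
    next
      case (Complete a)
      show ?thesis
      proof (cases "ph (nd g a)")
        case Idle then show ?thesis using en Complete by (simp add: enabled_def)
      next
        case (Wait2 X) then show ?thesis using Complete by (intro same) (auto simp: chan_Complete2 nd_Complete2)
      next
        case Wait1
        show ?thesis
        proof (cases "j = a")
          case False then show ?thesis using Complete Wait1 by (intro same) (auto simp: chan_Complete1 nd_Complete1)
        next
          case True
          have L: "len (nd g a) = 2 * kstep (nd g a)" using NInvD(1)[OF N[rule_format, of a]] Wait1 by auto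
          let ?L = "len (nd g a)"
          have m: "msg a (nd ?g a) (Suc ?L) = (a, MSet (R1of (cur_R (nd g a))), Suc ?L, Rv (nd g a) ?L)"
            using Complete Wait1 L by (simp add: msg_def pay_def nd_Complete1 cur_R_def)
          have up: "[Suc p0..<Suc (Suc ?L)] = [Suc p0..<Suc ?L] @ [Suc ?L]" using p0(2) True by (simp add: upt_Suc)
          show ?thesis
          proof (intro exI conjI)
            show "1 \<le> p0" "p0 \<le> len (nd ?g j)" using p0 True Complete Wait1 by (auto simp: nd_Complete1)
            have "chan ?g j i = map (msg a (nd g a)) [Suc p0..<Suc ?L] @ [(a, MSet (R1of (cur_R (nd g a))), Suc ?L, Rv (nd g a) ?L)]"
              using True Complete Wait1 ij p0(3) by (simp add: chan_Complete1)
            also have "\<dots> = map (msg a (nd ?g a)) [Suc p0..<Suc ?L] @ [msg a (nd ?g a) (Suc ?L)]"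
              using map_msg_ext[OF N[rule_format, of a] E[of a], of a "Suc p0"] m by simp
            also have "\<dots> = map (msg a (nd ?g a)) [Suc p0..<Suc (Suc ?L)]" using up by simp
            finally show "chan ?g j i = map (msg j (nd ?g j)) [Suc p0..<Suc (len (nd ?g j))]"
              using True Complete Wait1 by (simp add: nd_Complete1)
            show "p0 \<le> len (nd ?g i) \<or> (p0 = Suc (len (nd ?g i)) \<and> tr \<le> card (Rv (nd ?g i) (len (nd ?g i))))"
              by (rule cond[OF p0(4)])
          qed
        qed
      qed
    next
      case (Crash a)
      then show ?thesis by (intro same) (auto simp: chan_Crash nd_Crash)
    next
      case Skip
      then show ?thesis by (intro same) (auto simp: gstep_def)
    next
      case (Recv a b)
      show ?thesis
      proof (cases "j = b \<and> i = a")
        case False then show ?thesis using Recv by (intro same) (auto simp: chan_Recv nd_Recv)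
      next
        case True
        have en': "enabled n tr g (Recv a b)" using en Recv by simp
        obtain q0 where q0: "1 \<le> q0" "q0 < len (nd g b)" "q0 \<le> len (nd g a)"
          "hd (chan g b a) = msg b (nd g b) (Suc q0)"
          "tl (chan g b a) = map (msg b (nd g b)) [Suc (Suc q0)..<Suc (len (nd g b))]"
          using Recv_head[OF C en'] by metis
        have lb: "len (nd ?g b) = len (nd g b)" "len (nd ?g a) = len (nd g a)" using Recv by (auto simp: nd_Recv)
        show ?thesis
        proof (intro exI conjI)
          show "1 \<le> Suc q0" "Suc q0 \<le> len (nd ?g j)" using q0 True lb by auto
          have "chan ?g j i = map (msg b (nd g b)) [Suc (Suc q0)..<Suc (len (nd g b))]"
            using True Recv q0(5) by (simp add: chan_Recv)
          also have "\<dots> = map (msg b (nd ?g b)) [Suc (Suc q0)..<Suc (len (nd g b))]"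
            by (rule map_msg_ext[OF N[rule_format, of b] E[of b], symmetric])
          finally show "chan ?g j i = map (msg j (nd ?g j)) [Suc (Suc q0)..<Suc (len (nd ?g j))]"
            using True lb by simp
          show "Suc q0 \<le> len (nd ?g i) \<or> (Suc q0 = Suc (len (nd ?g i)) \<and> tr \<le> card (Rv (nd ?g i) (len (nd ?g i))))"
          proof (cases "q0 = len (nd g a)")
            case False then show ?thesis using q0(3) lb True by auto
          next
            case qa: True
            have nI: "ph (nd g a) \<noteq> Idle" using en' by (simp add: enabled_def)
            have "2 \<le> q0" using NInv_nidle[OF N[rule_format, of a] nI] qa by simp
            then have c: "tr \<le> card (Rv (nd g b) q0)" using NInvD(6)[OF N[rule_format, of b], of q0] q0(2) by simp
            have "Rv (nd ?g a) (len (nd g a)) = Rv (nd g a) (len (nd g a)) \<union> Rv (nd g b) q0"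
              using Recv q0(4) qa by (simp add: nd_Recv msg_def ru_Rv)
            then have "Rv (nd g b) q0 \<subseteq> Rv (nd ?g a) (len (nd ?g a))" using lb by auto
            then have "card (Rv (nd g b) q0) \<le> card (Rv (nd ?g a) (len (nd ?g a)))"
              using PInv_fin[OF P'] card_mono by blast
            then show ?thesis using c qa lb True by auto
          qed
        qed
      qed
    qed
  qed
qed

lemma Inv_step: "Inv n tr ts g \<Longrightarrow> enabled n tr g e \<Longrightarrow> Inv n tr ts (gstep n ts g e)"
  using NInv_step[of tr ts g n e] PInv_step[of n tr ts g e] CInv_step[of n tr ts g e]
  unfolding Inv_def by blast

lemma Inv_init: "Inv n tr ts init_state"
proof -
  have "NInv tr ts (init_node :: 'a nstate)" by (rule NInvI) (auto simp: init_node_def)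
  moreover have "PInv n (init_state :: 'a gstate)" by (simp add: PInv_def init_state_def init_node_def)
  moreover have "CInv n tr (init_state :: 'a gstate)" unfolding CInv_def
    by (intro ballI exI[of _ 1]) (simp add: init_state_def init_node_def)
  ultimately show ?thesis by (simp add: Inv_def init_state_def)
qed

lemma crashed_len: "enabled n tr g e \<Longrightarrow> crashed (nd (gstep n ts g e) j) \<Longrightarrow> len (nd (gstep n ts g e) j) = len (nd g j)"
proof (cases e)
  case (Complete a)
  assume en: "enabled n tr g e" and c: "crashed (nd (gstep n ts g e) j)"
  show ?thesis
  proof (cases "ph (nd g a)")
    case Idle then show ?thesis using en Complete by (simp add: enabled_def)
  next
    case Wait1 then show ?thesis using en c Complete by (auto simp: nd_Complete1 enabled_def split: if_splits)
  next
    case (Wait2 X) then show ?thesis using en c Complete by (auto simp: nd_Complete2 enabled_def split: if_splits)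
  qed
next
  case (Call a m) then show "enabled n tr g e \<Longrightarrow> crashed (nd (gstep n ts g e) j) \<Longrightarrow> len (nd (gstep n ts g e) j) = len (nd g j)"
    by (auto simp: nd_Call enabled_def split: if_splits)
next
  case (Recv a b) then show "enabled n tr g e \<Longrightarrow> crashed (nd (gstep n ts g e) j) \<Longrightarrow> len (nd (gstep n ts g e) j) = len (nd g j)"
    by (auto simp: nd_Recv enabled_def split: if_splits)
next
  case (Crash a) then show "enabled n tr g e \<Longrightarrow> crashed (nd (gstep n ts g e) j) \<Longrightarrow> len (nd (gstep n ts g e) j) = len (nd g j)"
    by (auto simp: nd_Crash enabled_def split: if_splits)
next
  case Skip then show "enabled n tr g e \<Longrightarrow> crashed (nd (gstep n ts g e) j) \<Longrightarrow> len (nd (gstep n ts g e) j) = len (nd g j)"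
    by (simp add: gstep_def)
qed

definition pc :: "'m nstate \<Rightarrow> nat" where
  "pc ns = 3 * kstep ns + (case ph ns of Wait1 \<Rightarrow> 0 | Wait2 _ \<Rightarrow> 1 | Idle \<Rightarrow> 2)"

lemma pc_step:
  assumes N: "\<forall>k. NInv tr ts (nd g k)" and en: "enabled n tr g e"
  shows "pc (nd (gstep n ts g e) i) = pc (nd g i) + (if e \<in> {Call i m | m. True} \<or> e = Complete i then 1 else 0)"
proof (cases e)
  case (Call a m)
  then show ?thesis using en by (auto simp: nd_Call pc_def enabled_def)
next
  case (Complete a)
  show ?thesis
  proof (cases "ph (nd g a)")
    case Idle then show ?thesis using en Complete by (simp add: enabled_def)
  next
    case Wait1 then show ?thesis using Complete by (auto simp: nd_Complete1 pc_def)
  next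
    case (Wait2 X) then show ?thesis using Complete by (auto simp: nd_Complete2 pc_def)
  qed
qed (auto simp: nd_Recv nd_Crash pc_def gstep_def split: if_splits)

lemma pc_len: "NInv tr ts a \<Longrightarrow> NInv tr ts b \<Longrightarrow> pc a = pc b \<Longrightarrow> len a = len b \<and> (ph a = Idle \<longleftrightarrow> ph b = Idle)"
  using NInvD(1)[of tr ts a] NInvD(1)[of tr ts b] by (auto simp: pc_def; presburger)

lemma pc_bound: "NInv tr ts a \<Longrightarrow> pc a \<le> 3 * len a + 2"
  using NInvD(1)[of tr ts a] by (auto simp: pc_def)

lemma pchan_step:
  assumes I: "Inv n tr ts g" and en: "enabled n tr g e" and ij: "i \<in> {1..n}" "j \<in> {1..n}"
  shows "len (nd (gstep n ts g e) j) - length (chan (gstep n ts g e) j i) = len (nd g j) - length (chan g j i) + (if e = Recv i j then 1 else 0)"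
proof -
  have C: "CInv n tr g" using I by (simp add: Inv_def)
  obtain p where p: "p \<le> len (nd g j)" "chan g j i = map (msg j (nd g j)) [Suc p..<Suc (len (nd g j))]"
    using CInvD[OF C ij] by metis
  have le: "length (chan g j i) \<le> len (nd g j)" using p by simp
  show ?thesis
  proof (cases e)
    case (Call a m)
    then show ?thesis using ij le by (auto simp: nd_Call chan_Call)
  next
    case (Complete a)
    show ?thesis
    proof (cases "ph (nd g a)")
      case Idle then show ?thesis using en Complete by (simp add: enabled_def)
    next
      case Wait1 then show ?thesis using Complete ij le by (auto simp: nd_Complete1 chan_Complete1)
    next
      case (Wait2 X) then show ?thesis using Complete by (auto simp: nd_Complete2 chan_Complete2)
    qed
  next
    case (Recv a b)
    have "chan g b a \<noteq> []" using en Recv by (simp add: enabled_def)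
    then obtain x xs where xs: "chan g b a = x # xs" by (cases "chan g b a") auto
    then show ?thesis using Recv le by (auto simp: nd_Recv chan_Recv)
  qed (auto simp: nd_Crash chan_Crash gstep_def)
qed

lemma pchan_eq:
  assumes I: "Inv n tr ts g" and ij: "i \<in> {1..n}" "j \<in> {1..n}"
    and p: "p \<le> len (nd g j)" "chan g j i = map (msg j (nd g j)) [Suc p..<Suc (len (nd g j))]"
  shows "len (nd g j) - length (chan g j i) = p"
  using p by simp

context
  fixes n tr ts :: nat and st :: "nat \<Rightarrow> 'm gstate" and ev :: "nat \<Rightarrow> 'm event"
  assumes RUN: "run n tr ts st ev"
begin

lemma run_en: "enabled n tr (st t) (ev t)" and run_step: "st (Suc t) = gstep n ts (st t) (ev t)"
  using RUN by (auto simp: run_def)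

lemma Inv_run: "Inv n tr ts (st t)"
proof (induction t)
  case 0 then show ?case using RUN Inv_init by (simp add: run_def)
next
  case (Suc t) then show ?case using Inv_step run_en run_step by metis
qed

lemma N_run: "NInv tr ts (nd (st t) k)" using Inv_run by (simp add: Inv_def)
lemma N_run_all: "\<forall>k. NInv tr ts (nd (st t) k)" using Inv_run by (simp add: Inv_def)
lemma P_run: "PInv n (st t)" using Inv_run by (simp add: Inv_def)
lemma C_run: "CInv n tr (st t)" using Inv_run by (simp add: Inv_def)

lemma ext_run: "t \<le> t' \<Longrightarrow> ext (nd (st t) k) (nd (st t') k)"
proof (induction t' rule: dec_induct)
  case base then show ?case by (rule ext_refl)
next
  case (step m)
  have "ext (nd (st m) k) (nd (st (Suc m)) k)" using ext_step[OF N_run_all run_en] run_step by metis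
  then show ?case using step ext_trans by blast
qed

lemma len_mono: "t \<le> t' \<Longrightarrow> len (nd (st t) k) \<le> len (nd (st t') k)"
  using ext_run unfolding ext_def by blast
lemma Rv_frozen: "t \<le> t' \<Longrightarrow> q < len (nd (st t) k) \<Longrightarrow> Rv (nd (st t') k) q = Rv (nd (st t) k) q"
  using ext_run unfolding ext_def by blast
lemma Rv_mono: "t \<le> t' \<Longrightarrow> Rv (nd (st t) k) q \<subseteq> Rv (nd (st t') k) q"
  using ext_run unfolding ext_def by blast
lemma crashed_mono: "t \<le> t' \<Longrightarrow> crashed (nd (st t) k) \<Longrightarrow> crashed (nd (st t') k)"
  using ext_run unfolding ext_def by blast
lemma inp_stable: "t \<le> t' \<Longrightarrow> inp (nd (st t) k) c = Some m \<Longrightarrow> inp (nd (st t') k) c = Some m"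
proof -
  assume a: "t \<le> t'" "inp (nd (st t) k) c = Some m"
  have "c \<le> kstep (nd (st t) k)" using NInvD(2)[OF N_run, of t k c] a(2) by auto
  then show ?thesis using ext_run[OF a(1), of k] a(2) unfolding ext_def by auto
qed

lemma inp_uniq: "inp (nd (st t) k) c = Some m \<Longrightarrow> inp (nd (st t') k) c = Some m' \<Longrightarrow> m = m'"
proof (cases "t \<le> t'")
  case True
  assume "inp (nd (st t) k) c = Some m" "inp (nd (st t') k) c = Some m'"
  then show ?thesis using inp_stable[OF True] by fastforce
next
  case False
  assume "inp (nd (st t) k) c = Some m" "inp (nd (st t') k) c = Some m'"
  then show ?thesis using inp_stable[of t' t] False by fastforce
qed

lemma pc_mono: "t \<le> t' \<Longrightarrow> pc (nd (st t) k) \<le> pc (nd (st t') k)"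
proof (induction t' rule: dec_induct)
  case base then show ?case by simp
next
  case (step m)
  then show ?case using pc_step[OF N_run_all run_en, of m k] run_step[of m] by simp
qed

end

definition Mset :: "nat \<Rightarrow> 'm gstate \<Rightarrow> nat \<Rightarrow> (nat \<times> 'm) set" where
  "Mset n g s = {(k, m). k \<in> {1..n} \<and> inp (nd g k) s = Some m}"

lemma Mset_inj: "inj_on fst (Mset n g s)"
  unfolding inj_on_def Mset_def by auto

lemma Mset_sub: "Mset n g s \<subseteq> (\<lambda>k. (k, the (inp (nd g k) s))) ` {1..n}"
proof
  fix x assume "x \<in> Mset n g s"
  then obtain k m where "x = (k, m)" "k \<in> {1..n}" "inp (nd g k) s = Some m" unfolding Mset_def by blast
  then show "x \<in> (\<lambda>k. (k, the (inp (nd g k) s))) ` {1..n}" by force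
qed

lemma Mset_fin: "finite (Mset n g s)"
  by (rule finite_subset[OF Mset_sub]) simp

lemma Mset_card: "card (Mset n g s) \<le> n"
proof -
  have "card (Mset n g s) \<le> card ((\<lambda>k. (k, the (inp (nd g k) s))) ` {1..n})"
    by (rule card_mono[OF _ Mset_sub]) simp
  also have "\<dots> \<le> card {1..n}" by (rule card_image_le) simp
  finally show ?thesis by simp
qed

lemma R1of_card: "(\<forall>x\<in>A. \<exists>k m. x = (k, Base m)) \<Longrightarrow> card (R1of A) = card A"
proof -
  assume a: "\<forall>x\<in>A. \<exists>k m. x = (k, Base m)"
  have "A = (\<lambda>(k, m). (k, Base m)) ` R1of A"
  proof
    show "A \<subseteq> (\<lambda>(k, m). (k, Base m)) ` R1of A"
    proof
      fix x assume "x \<in> A"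
      moreover then obtain k m where "x = (k, Base m)" using a by blast
      ultimately show "x \<in> (\<lambda>(k, m). (k, Base m)) ` R1of A" unfolding R1of_def by (auto intro: image_eqI[of _ _ "(k, m)"])
    qed
    show "(\<lambda>(k, m). (k, Base m)) ` R1of A \<subseteq> A" unfolding R1of_def by auto
  qed
  moreover have "inj_on (\<lambda>(k, m). (k, Base m)) (R1of A)" unfolding inj_on_def by auto
  ultimately show ?thesis using card_image by metis
qed

context
  fixes n tr ts :: nat and st :: "nat \<Rightarrow> 'm gstate" and ev :: "nat \<Rightarrow> 'm event"
  assumes RUN: "run n tr ts st ev"
begin

lemma A_elem:
  assumes "(k, p) \<in> Rv (nd (st t) i) (2 * s)"
  shows "k \<in> {1..n} \<and> (\<exists>m. p = Base m \<and> inp (nd (st t) k) s = Some m)"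
proof -
  have P: "k \<in> {1..n}" "2 * s \<le> len (nd (st t) k)" "p = pay (nd (st t) k) (2 * s)"
    using P_run[OF RUN, of t] assms unfolding PInv_def by blast+
  have "s \<noteq> 0"
  proof
    assume "s = 0"
    then show False using assms NInvD(5)[OF N_run[OF RUN, of t i], of 0] by simp
  qed
  moreover have "s \<le> kstep (nd (st t) k)" using P(2) NInv_len[OF N_run[OF RUN, of t k]] by simp
  ultimately obtain m where "inp (nd (st t) k) s = Some m" using NInvD(2)[OF N_run[OF RUN, of t k], of s] by auto
  then show ?thesis using P by (simp add: pay_def)
qed

lemma A_R1of: "R1of (Rv (nd (st t) i) (2 * s)) \<subseteq> Mset n (st t) s"
  unfolding R1of_def Mset_def using A_elem by fastforce

lemma A_card: "card (R1of (Rv (nd (st t) i) (2 * s))) = card (Rv (nd (st t) i) (2 * s))"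
  by (rule R1of_card) (use A_elem in fastforce)

lemma C_elem:
  assumes "(k, p) \<in> Rv (nd (st t) i) (2 * s + 1)"
  shows "k \<in> {1..n} \<and> 2 * s + 1 \<le> len (nd (st t) k) \<and> p = MSet (R1of (Rv (nd (st t) k) (2 * s)))"
proof -
  have P: "k \<in> {1..n}" "2 * s + 1 \<le> len (nd (st t) k)" "p = pay (nd (st t) k) (2 * s + 1)"
    using P_run[OF RUN, of t] assms unfolding PInv_def by blast+
  then show ?thesis by (simp add: pay_def)
qed

lemma Mset_msgs: "S \<subseteq> Mset n (st t) s \<Longrightarrow> msgs_of st (fst ` S) s = S"
proof
  assume S: "S \<subseteq> Mset n (st t) s"
  show "S \<subseteq> msgs_of st (fst ` S) s"
    using S unfolding msgs_of_def Mset_def bcast_def by force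
  show "msgs_of st (fst ` S) s \<subseteq> S"
  proof
    fix x assume "x \<in> msgs_of st (fst ` S) s"
    then obtain j m t' where x: "x = (j, m)" "j \<in> fst ` S" "inp (nd (st t') j) s = Some m"
      unfolding msgs_of_def bcast_def by auto
    then obtain m0 where "(j, m0) \<in> S" by auto
    moreover then have "inp (nd (st t) j) s = Some m0" using S unfolding Mset_def by auto
    ultimately show "x \<in> S" using inp_uniq[OF RUN] x by metis
  qed
qed

lemma out_len:
  assumes "out (nd (st t) i) s = Some v"
  shows "1 \<le> s \<and> 2 * s + 1 \<le> len (nd (st t) i) \<and> (2 * s + 1 < len (nd (st t) i) \<or> ph (nd (st t) i) = Idle)"
proof -
  have "1 \<le> s \<and> (s < kstep (nd (st t) i) \<or> (s = kstep (nd (st t) i) \<and> ph (nd (st t) i) = Idle))"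
    using NInvD(3)[OF N_run[OF RUN, of t i], of s] assms by auto
  then show ?thesis using NInvD(1)[OF N_run[OF RUN, of t i]] by auto
qed

lemma receive_thr:
  assumes "returns st i s R B"
  shows "\<exists>NR\<subseteq>{1..n}. tr \<le> card NR \<and> (\<forall>j\<in>NR. called st j s) \<and> R = msgs_of st NR s"
proof -
  obtain t where o: "out (nd (st t) i) s = Some (R, B)" using assms unfolding returns_def by blast
  let ?A = "Rv (nd (st t) i) (2 * s)" and ?C = "Rv (nd (st t) i) (2 * s + 1)"
  have RB: "R = Rfun ?A ?C" using NInvD(4)[OF N_run[OF RUN] o] by simp
  have ol: "1 \<le> s" "2 * s + 1 \<le> len (nd (st t) i)" using out_len[OF o] by auto
  have cA: "tr \<le> card ?A" using NInvD(6)[OF N_run[OF RUN, of t i], of "2 * s"] ol by simp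
  have RM: "R \<subseteq> Mset n (st t) s"
  proof -
    have "X \<subseteq> Mset n (st t) s" if "(j, X) \<in> R2of ?C" for j X
      using that C_elem[of j "MSet X" t i s] A_R1of[of t j s] unfolding R2of_def by auto
    then show ?thesis using A_R1of[of t i s] unfolding RB Rfun_def by blast
  qed
  let ?NR = "fst ` R"
  have "?NR \<subseteq> {1..n}" using RM unfolding Mset_def by auto
  moreover have "R = msgs_of st ?NR s" using Mset_msgs[OF RM] by simp
  moreover have "\<forall>j\<in>?NR. called st j s"
  proof
    fix j assume "j \<in> ?NR"
    then obtain m where "(j, m) \<in> R" by auto
    then have "inp (nd (st t) j) s = Some m" using RM unfolding Mset_def by auto
    then show "called st j s" unfolding called_def bcast_def by blast
  qed
  moreover have "tr \<le> card ?NR"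
  proof -
    have "card (fst ` R1of ?A) = card (R1of ?A)"
      using A_R1of[of t i s] Mset_inj[of n "st t" s] card_image inj_on_subset by metis
    also have "\<dots> = card ?A" by (rule A_card)
    finally have e: "card (fst ` R1of ?A) = card ?A" .
    have "fst ` R1of ?A \<subseteq> ?NR" unfolding RB Rfun_def by auto
    moreover have "finite ?NR" using \<open>?NR \<subseteq> {1..n}\<close> finite_subset by blast
    ultimately have "card (fst ` R1of ?A) \<le> card ?NR" by (rule card_mono[rotated])
    then show ?thesis using e cA by simp
  qed
  ultimately show ?thesis by blast
qed

end

lemma real_ineq:
  fixes r b n tr u :: real
  assumes h: "r * tr \<le> b * r + (n - b) * u" and "0 \<le> b" "b \<le> n" "tr \<le> r" "0 \<le> u" "u + 1 \<le> tr" "tr \<le> n"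
  shows "n - tr * (n - tr) / (tr - u) \<le> b"
proof -
  have d: "0 < tr - u" using assms by simp
  have key: "tr * tr - n * u \<le> b * (tr - u)"
  proof (cases "tr \<le> b")
    case True
    have "tr * (tr - u) \<le> b * (tr - u)" using True d by (simp add: mult_right_mono)
    moreover have "tr * u \<le> n * u" using assms by (simp add: mult_right_mono)
    ultimately show ?thesis by (simp add: algebra_simps)
  next
    case False
    have "tr * (tr - b) \<le> r * (tr - b)" using False assms by (simp add: mult_right_mono)
    also have "r * (tr - b) \<le> (n - b) * u" using h by (simp add: algebra_simps)
    finally show ?thesis by (simp add: algebra_simps)
  qed
  have "n - tr * (n - tr) / (tr - u) = (n * (tr - u) - tr * (n - tr)) / (tr - u)"
    using d by (simp add: field_simps)
  also have "\<dots> = (tr * tr - n * u) / (tr - u)" by (simp add: algebra_simps)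
  also have "\<dots> \<le> b" using key d by (simp add: divide_le_eq)
  finally show ?thesis .
qed
lemma card_as_sum: "finite M \<Longrightarrow> X \<subseteq> M \<Longrightarrow> card X = (\<Sum>x\<in>M. if x \<in> X then 1 else 0 :: nat)"
proof -
  assume "finite M" "X \<subseteq> M"
  then have "(\<Sum>x\<in>M. if x \<in> X then 1 else 0 :: nat) = (\<Sum>x\<in>M \<inter> X. 1)"
    using sum.inter_restrict[of M "\<lambda>_. 1::nat" X] by simp
  also have "M \<inter> X = X" using \<open>X \<subseteq> M\<close> by blast
  finally show ?thesis by simp
qed

lemma count_nat:
  fixes F :: "('k \<times> 'x set) set" and M :: "'x set"
  assumes F: "finite F" and M: "finite M" and sub: "\<forall>a\<in>F. snd a \<subseteq> M \<and> tr \<le> card (snd a)"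
    and ts: "1 \<le> ts"
  defines "B \<equiv> {x. ts \<le> card {a \<in> F. x \<in> snd a}}"
  shows "card F * tr \<le> card B * card F + (card M - card B) * (ts - 1)" and "B \<subseteq> M"
proof -
  let ?c = "\<lambda>x. card {a \<in> F. x \<in> snd a}"
  show BM: "B \<subseteq> M"
  proof
    fix x assume "x \<in> B"
    have "{a \<in> F. x \<in> snd a} \<noteq> {}"
    proof
      assume e: "{a \<in> F. x \<in> snd a} = {}"
      have c: "ts \<le> card {a \<in> F. x \<in> snd a}" using \<open>x \<in> B\<close> unfolding B_def by simp
      show False using c ts unfolding e by simp
    qed
    then obtain a where "a \<in> F" "x \<in> snd a" by blast
    then show "x \<in> M" using sub by blast
  qed
  have "card F * tr \<le> (\<Sum>a\<in>F. card (snd a))"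
    using sum_bounded_below[of F tr "\<lambda>a. card (snd a)"] sub by simp
  also have "\<dots> = (\<Sum>a\<in>F. \<Sum>x\<in>M. if x \<in> snd a then 1 else 0)"
    by (rule sum.cong[OF refl]) (use sub M card_as_sum in blast)
  also have "\<dots> = (\<Sum>x\<in>M. \<Sum>a\<in>F. if x \<in> snd a then 1 else 0)" by (rule sum.swap)
  also have "\<dots> = (\<Sum>x\<in>M. ?c x)"
  proof (rule sum.cong[OF refl])
    fix x assume "x \<in> M"
    have "(\<Sum>a\<in>F. if x \<in> snd a then 1 else 0 :: nat) = (\<Sum>a\<in>F. if a \<in> {a \<in> F. x \<in> snd a} then 1 else 0)"
      by (rule sum.cong) auto
    also have "\<dots> = ?c x" using card_as_sum[OF F, of "{a \<in> F. x \<in> snd a}"] by simp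
    finally show "(\<Sum>a\<in>F. if x \<in> snd a then 1 else 0) = ?c x" .
  qed
  also have "\<dots> = (\<Sum>x\<in>B. ?c x) + (\<Sum>x\<in>M - B. ?c x)"
    using sum.subset_diff[OF BM M, of ?c] by simp
  also have "\<dots> \<le> (\<Sum>x\<in>B. card F) + (\<Sum>x\<in>M - B. ts - 1)"
  proof (rule add_mono)
    show "(\<Sum>x\<in>B. ?c x) \<le> (\<Sum>x\<in>B. card F)"
      by (rule sum_mono) (rule card_mono[OF F], auto)
    show "(\<Sum>x\<in>M - B. ?c x) \<le> (\<Sum>x\<in>M - B. ts - 1)"
      by (rule sum_mono) (auto simp: B_def)
  qed
  also have "\<dots> = card B * card F + (card M - card B) * (ts - 1)"
    using card_Diff_subset[OF finite_subset[OF BM M] BM] by simp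
  finally show "card F * tr \<le> card B * card F + (card M - card B) * (ts - 1)" .
qed

lemma count_real:
  fixes F :: "('k \<times> 'x set) set" and M :: "'x set"
  assumes F: "finite F" and M: "finite M" and sub: "\<forall>a\<in>F. snd a \<subseteq> M \<and> tr \<le> card (snd a)"
    and ts: "1 \<le> ts" "ts \<le> tr" and Fc: "tr \<le> card F" and Mc: "card M \<le> n" and trn: "tr \<le> n"
  shows "real n - real tr * (real n - real tr) / (real tr - real ts + 1) \<le> real (card {x. ts \<le> card {a \<in> F. x \<in> snd a}})"
proof -
  define B where "B = {x. ts \<le> card {a \<in> F. x \<in> snd a}}"
  have h: "card F * tr \<le> card B * card F + (card M - card B) * (ts - 1)" and BM: "B \<subseteq> M"
    using count_nat[OF F M sub ts(1)] unfolding B_def by blast+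
  have bm: "card B \<le> card M" using card_mono[OF M BM] .
  have h2: "real (card F) * real tr \<le> real (card B) * real (card F) + (real n - real (card B)) * (real ts - 1)"
  proof -
    have "real (card F * tr) \<le> real (card B * card F + (card M - card B) * (ts - 1))" using h by linarith
    then have "real (card F) * real tr \<le> real (card B) * real (card F) + (real (card M) - real (card B)) * (real ts - 1)"
      using bm ts by (simp add: of_nat_diff)
    moreover have "(real (card M) - real (card B)) * (real ts - 1) \<le> (real n - real (card B)) * (real ts - 1)"
      using Mc ts by (intro mult_right_mono) auto
    ultimately show ?thesis by linarith
  qed
  have "real n - real tr * (real n - real tr) / (real tr - (real ts - 1)) \<le> real (card B)"
    by (rule real_ineq[OF h2]) (use bm Mc ts Fc trn in auto)
  then show ?thesis unfolding B_def by (simp add: algebra_simps)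
qed


lemma R2of_card: "(\<forall>x\<in>C. \<exists>k X. x = (k, MSet X)) \<Longrightarrow> card (R2of C) = card C \<and> (finite C \<longrightarrow> finite (R2of C))"
proof -
  assume a: "\<forall>x\<in>C. \<exists>k X. x = (k, MSet X)"
  have e: "C = (\<lambda>(k, X). (k, MSet X)) ` R2of C"
  proof
    show "C \<subseteq> (\<lambda>(k, X). (k, MSet X)) ` R2of C"
    proof
      fix x assume "x \<in> C"
      moreover then obtain k X where "x = (k, MSet X)" using a by blast
      ultimately show "x \<in> (\<lambda>(k, X). (k, MSet X)) ` R2of C" unfolding R2of_def by (auto intro: image_eqI[of _ _ "(k, X)"])
    qed
    show "(\<lambda>(k, X). (k, MSet X)) ` R2of C \<subseteq> C" unfolding R2of_def by auto
  qed
  have inj: "inj_on (\<lambda>(k, X). (k, MSet X)) (R2of C)" unfolding inj_on_def by auto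
  show ?thesis using e inj card_image finite_image_iff by metis
qed

lemma out_F:
  assumes RUN: "run n tr ts st ev" and o: "out (nd (st t) i) s = Some (R, B)"
  defines "F \<equiv> R2of (Rv (nd (st t) i) (2 * s + 1))"
  shows "finite F" "tr \<le> card F" "\<forall>a\<in>F. snd a \<subseteq> Mset n (st t) s \<and> tr \<le> card (snd a)"
    "inj_on fst F" "B = {x. ts \<le> card {a\<in>F. x \<in> snd a}}" "fst ` F \<subseteq> {1..n}"
    "\<forall>a\<in>F. (fst a, MSet (snd a)) \<in> Rv (nd (st t) i) (2 * s + 1)"
proof -
  let ?C = "Rv (nd (st t) i) (2 * s + 1)"
  have ol: "1 \<le> s" "2 * s + 1 \<le> len (nd (st t) i)" "2 * s + 1 < len (nd (st t) i) \<or> ph (nd (st t) i) = Idle"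
    using out_len[OF RUN o] by auto
  have allM: "\<forall>x\<in>?C. \<exists>k X. x = (k, MSet X)" using C_elem[OF RUN] by fast
  have "2 * s + 1 < len (nd (st t) i) \<or> (2 * s + 1 = len (nd (st t) i) \<and> ph (nd (st t) i) = Idle)"
    using ol by auto
  then have cC: "tr \<le> card ?C" using NInvD(6)[OF N_run[OF RUN, of t i], of "2 * s + 1"] ol by auto
  have fC: "finite ?C" using PInv_fin[OF P_run[OF RUN]] .
  show "finite F" "tr \<le> card F" using R2of_card[OF allM] cC fC unfolding F_def by auto
  show "\<forall>a\<in>F. snd a \<subseteq> Mset n (st t) s \<and> tr \<le> card (snd a)"
  proof
    fix a assume "a \<in> F"
    then obtain k X where a: "a = (k, X)" "(k, MSet X) \<in> ?C" unfolding F_def R2of_def by auto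
    then have k: "2 * s + 1 \<le> len (nd (st t) k)" "X = R1of (Rv (nd (st t) k) (2 * s))" using C_elem[OF RUN a(2)] by auto
    have "tr \<le> card (Rv (nd (st t) k) (2 * s))" using NInvD(6)[OF N_run[OF RUN, of t k], of "2 * s"] ol k by auto
    then show "snd a \<subseteq> Mset n (st t) s \<and> tr \<le> card (snd a)" using a k A_R1of[OF RUN] A_card[OF RUN] by simp
  qed
  show "inj_on fst F"
  proof (rule inj_onI)
    fix a b assume "a \<in> F" "b \<in> F" "fst a = fst b"
    then obtain k X Y where "a = (k, X)" "b = (k, Y)" "(k, MSet X) \<in> ?C" "(k, MSet Y) \<in> ?C"
      unfolding F_def R2of_def by auto
    then show "a = b" using PInv_uniq[OF P_run[OF RUN]] by fastforce
  qed
  have "B = Bfun ts ?C" using NInvD(4)[OF N_run[OF RUN, of t i] o] by simp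
  moreover have "\<And>x. {(j, X). (j, X) \<in> F \<and> x \<in> X} = {a\<in>F. x \<in> snd a}" by auto
  ultimately show "B = {x. ts \<le> card {a\<in>F. x \<in> snd a}}" unfolding Bfun_def F_def by simp
  show "fst ` F \<subseteq> {1..n}" using C_elem[OF RUN] unfolding F_def R2of_def by fastforce
  show "\<forall>a\<in>F. (fst a, MSet (snd a)) \<in> ?C" unfolding F_def R2of_def by auto
qed

lemma broadcast_thr:
  assumes RUN: "run n tr ts st ev" and r: "returns st i s R B"
    and ts: "1 \<le> ts" "ts \<le> tr" and trn: "tr \<le> n"
    and tb: "real tb \<le> real n - real tr * (real n - real tr) / (real tr - real ts + 1)"
  shows "\<exists>NB\<subseteq>{1..n}. tb \<le> card NB \<and> (\<forall>j\<in>NB. called st j s) \<and> B = msgs_of st NB s"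
proof -
  obtain t where o: "out (nd (st t) i) s = Some (R, B)" using r unfolding returns_def by blast
  define F where "F = R2of (Rv (nd (st t) i) (2 * s + 1))"
  note FF = out_F[OF RUN o, folded F_def]
  have BM: "B \<subseteq> Mset n (st t) s"
    using count_nat(2)[OF FF(1) Mset_fin FF(3) ts(1)] FF(5) by simp
  have "real n - real tr * (real n - real tr) / (real tr - real ts + 1) \<le> real (card B)"
    using count_real[OF FF(1) Mset_fin FF(3) ts FF(2) Mset_card trn] FF(5) by simp
  then have tbB: "tb \<le> card B" using tb by linarith
  let ?NB = "fst ` B"
  have "card ?NB = card B" using card_image inj_on_subset[OF Mset_inj BM] by blast
  moreover have "?NB \<subseteq> {1..n}" using BM unfolding Mset_def by auto
  moreover have "B = msgs_of st ?NB s" using Mset_msgs[OF RUN BM] by simp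
  moreover have "\<forall>j\<in>?NB. called st j s"
  proof
    fix j assume "j \<in> ?NB"
    then obtain m where "(j, m) \<in> B" by auto
    then have "inp (nd (st t) j) s = Some m" using BM unfolding Mset_def by auto
    then show "called st j s" unfolding called_def bcast_def by blast
  qed
  ultimately show ?thesis using tbB by (intro exI[of _ ?NB]) auto
qed

lemma would_recv:
  assumes RUN: "run n tr ts st ev" and jX: "(j, MSet X) \<in> Rv (nd (st t) i) (2 * s + 1)" and x: "x \<in> X"
  shows "would_receive n tr ts st j s x"
  unfolding would_receive_def
proof (intro allI impI)
  fix st' ev' R' B'
  assume RUN': "run n tr ts st' ev'" and agree: "\<forall>t. \<not> crashed (nd (st t) j) \<longrightarrow> st' t = st t"
    and ret: "returns st' j s R' B'"
  have Xd: "2 * s + 1 \<le> len (nd (st t) j)" "X = R1of (Rv (nd (st t) j) (2 * s))" using C_elem[OF RUN jX] by auto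
  define T where "T = (LEAST T. 2 * s + 1 \<le> len (nd (st T) j))"
  have Tt: "T \<le> t" unfolding T_def using Xd(1) by (rule Least_le)
  have TL: "2 * s + 1 \<le> len (nd (st T) j)" unfolding T_def using Xd(1) by (rule LeastI)
  have nc: "T \<noteq> 0 \<Longrightarrow> \<not> crashed (nd (st T) j)"
  proof -
    assume "T \<noteq> 0"
    then obtain T0 where T0: "T = Suc T0" by (cases T) auto
    have "T0 < T" using T0 by simp
    then have "\<not> 2 * s + 1 \<le> len (nd (st T0) j)" unfolding T_def
      by (rule not_less_Least[of T0 "\<lambda>T. 2 * s + 1 \<le> len (nd (st T) j)"])
    then have "len (nd (st (Suc T0)) j) \<noteq> len (nd (st T0) j)" using TL T0 by auto
    then show ?thesis using crashed_len[OF run_en[OF RUN, of T0]] run_step[OF RUN, of T0] T0 by metis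
  qed
  have agT: "st' T = st T"
  proof (cases "T = 0")
    case True then show ?thesis using RUN RUN' by (simp add: run_def)
  next
    case False then show ?thesis using agree nc by blast
  qed
  obtain t' where o: "out (nd (st' t') j) s = Some (R', B')" using ret unfolding returns_def by blast
  show "x \<in> R'"
  proof (cases "t' < T")
    case True
    then have "T \<noteq> 0" by simp
    then have "\<not> crashed (nd (st t') j)" using nc crashed_mono[OF RUN, of t' T j] True by auto
    then have "st' t' = st t'" using agree by blast
    then have "2 * s + 1 \<le> len (nd (st t') j)" using out_len[OF RUN, of t' j s] o by simp
    then have "T \<le> t'" unfolding T_def by (rule Least_le)
    then show ?thesis using True by simp
  next
    case False
    then have Tt': "T \<le> t'" by simp
    have "R' = Rfun (Rv (nd (st' t') j) (2 * s)) (Rv (nd (st' t') j) (2 * s + 1))"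
      using NInvD(4)[OF N_run[OF RUN', of t' j] o] by simp
    then have "R1of (Rv (nd (st' t') j) (2 * s)) \<subseteq> R'" unfolding Rfun_def by blast
    moreover have "Rv (nd (st' t') j) (2 * s) = Rv (nd (st' T) j) (2 * s)"
      using Rv_frozen[OF RUN' Tt'] TL agT by simp
    moreover have "Rv (nd (st t) j) (2 * s) = Rv (nd (st T) j) (2 * s)"
      using Rv_frozen[OF RUN Tt] TL by simp
    ultimately show ?thesis using x Xd(2) agT by auto
  qed
qed

lemma spread_thr:
  assumes RUN: "run n tr ts st ev" and r: "returns st i s R B" and xB: "x \<in> B"
  shows "\<exists>NS\<subseteq>{1..n}. ts \<le> card NS \<and> (\<forall>j\<in>NS. would_receive n tr ts st j s x)"
proof -
  obtain t where o: "out (nd (st t) i) s = Some (R, B)" using r unfolding returns_def by blast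
  define F where "F = R2of (Rv (nd (st t) i) (2 * s + 1))"
  note FF = out_F[OF RUN o, folded F_def]
  let ?S = "{a\<in>F. x \<in> snd a}"
  have c: "ts \<le> card ?S" using xB FF(5) by simp
  have "card (fst ` ?S) = card ?S" using card_image inj_on_subset[OF FF(4)] by (metis (no_types, lifting) mem_Collect_eq subsetI)
  moreover have "fst ` ?S \<subseteq> {1..n}" using FF(6) by auto
  moreover have "\<forall>j\<in>fst ` ?S. would_receive n tr ts st j s x"
  proof
    fix j assume "j \<in> fst ` ?S"
    then obtain X where "(j, X) \<in> F" "x \<in> X" by auto
    then have "(j, MSet X) \<in> Rv (nd (st t) i) (2 * s + 1)" using FF(7) by fastforce
    then show "would_receive n tr ts st j s x" using would_recv[OF RUN _ \<open>x \<in> X\<close>] by blast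
  qed
  ultimately show ?thesis using c by (intro exI[of _ "fst ` ?S"]) auto
qed

lemma ivt_nat:
  fixes f :: "nat \<Rightarrow> nat"
  assumes step: "\<And>t. f (Suc t) \<le> Suc (f t)" and a: "f a \<le> c" and b: "c < f b" and ab: "a \<le> b"
  shows "\<exists>t. a \<le> t \<and> t < b \<and> f t = c \<and> f (Suc t) = Suc c"
  using ab b
proof (induction b rule: dec_induct)
  case base then show ?case using a by simp
next
  case (step m)
  show ?case
  proof (cases "f m \<le> c")
    case True
    then have "f m = c \<and> f (Suc m) = Suc c" using step.prems assms(1)[of m] by linarith
    then show ?thesis using step.hyps by auto
  next
    case False
    then obtain t where "a \<le> t \<and> t < m \<and> f t = c \<and> f (Suc t) = Suc c" using step.IH by auto
    then show ?thesis by auto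
  qed
qed

lemma mono_bounded_const:
  fixes f :: "nat \<Rightarrow> nat"
  assumes mono: "\<And>t t'. t \<le> t' \<Longrightarrow> f t \<le> f t'" and bd: "\<And>t. f t \<le> K"
  shows "\<exists>T. \<forall>t\<ge>T. f t = f T"
proof -
  have sub: "range f \<subseteq> {..K}" using bd by blast
  have fin: "finite (range f)" by (rule finite_subset[OF sub]) simp
  have ne: "range f \<noteq> {}" by simp
  have "Max (range f) \<in> range f" by (rule Max_in[OF fin ne])
  then obtain T where T: "Max (range f) = f T" by blast
  have "\<forall>t\<ge>T. f t = f T"
  proof (intro allI impI)
    fix t assume "T \<le> t"
    then have "f T \<le> f t" by (rule mono)
    moreover have "f t \<le> Max (range f)" by (rule Max_ge[OF fin]) simp
    ultimately show "f t = f T" using T by simp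
  qed
  then show ?thesis by blast
qed

context
  fixes n tr ts :: nat and st :: "nat \<Rightarrow> 'm gstate" and ev :: "nat \<Rightarrow> 'm event"
  assumes RUN: "run n tr ts st ev" and FAIR: "fair n tr st ev"
begin

lemma fair_call: "i \<in> {1..n} \<Longrightarrow> \<exists>t\<ge>t0. (\<forall>e\<in>{Call i m | m. True}. \<not> enabled n tr (st t) e) \<or> ev t \<in> {Call i m | m. True}"
  using FAIR unfolding fair_def weakly_fair_def by blast
lemma fair_complete: "i \<in> {1..n} \<Longrightarrow> \<exists>t\<ge>t0. (\<not> enabled n tr (st t) (Complete i)) \<or> ev t = Complete i"
  using FAIR unfolding fair_def weakly_fair_def by blast
lemma fair_recv: "i \<in> {1..n} \<Longrightarrow> j \<in> {1..n} \<Longrightarrow> \<exists>t\<ge>t0. (\<not> enabled n tr (st t) (Recv i j)) \<or> ev t = Recv i j"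
  using FAIR unfolding fair_def weakly_fair_def by blast

lemma pc_suc: "pc (nd (st (Suc t)) i) = pc (nd (st t) i) + (if ev t \<in> {Call i m | m. True} \<or> ev t = Complete i then 1 else 0)"
  using pc_step[OF N_run_all[OF RUN] run_en[OF RUN], of t i] run_step[OF RUN, of t] by simp

lemma stuck:
  assumes i: "i \<in> {1..n}" and nf: "\<forall>t. \<not> crashed (nd (st t) i)" and bd: "\<forall>t. len (nd (st t) i) \<le> L"
  shows "\<exists>T. \<forall>t\<ge>T. ph (nd (st t) i) \<noteq> Idle \<and> card (cur_R (nd (st t) i)) < tr \<and> len (nd (st t) i) = len (nd (st T) i)"
proof -
  have "\<exists>T. \<forall>t\<ge>T. pc (nd (st t) i) = pc (nd (st T) i)"
  proof (rule mono_bounded_const)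
    show "\<And>t t'. t \<le> t' \<Longrightarrow> pc (nd (st t) i) \<le> pc (nd (st t') i)" using pc_mono[OF RUN] by blast
    fix t
    show "pc (nd (st t) i) \<le> 3 * L + 2" using pc_bound[OF N_run[OF RUN, of t i]] bd[rule_format, of t] by linarith
  qed
  then obtain T where T: "\<And>t. T \<le> t \<Longrightarrow> pc (nd (st t) i) = pc (nd (st T) i)" by blast
  have same: "len (nd (st t) i) = len (nd (st T) i) \<and> (ph (nd (st t) i) = Idle \<longleftrightarrow> ph (nd (st T) i) = Idle)" if "T \<le> t" for t
    by (rule pc_len[OF N_run[OF RUN, of t i] N_run[OF RUN, of T i] T[OF that]])
  have noinc: "\<not> (ev t \<in> {Call i m | m. True} \<or> ev t = Complete i)" if "T \<le> t" for t
  proof -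
    have "pc (nd (st (Suc t)) i) = pc (nd (st t) i)" using T[OF that] T[OF le_SucI[OF that]] by simp
    then show ?thesis using pc_suc[of t i] by (simp split: if_splits)
  qed
  have nI: "ph (nd (st T) i) \<noteq> Idle"
  proof
    assume idle: "ph (nd (st T) i) = Idle"
    obtain t where t: "t \<ge> T" "(\<forall>e\<in>{Call i m | m. True}. \<not> enabled n tr (st t) e) \<or> ev t \<in> {Call i m | m. True}"
      using fair_call[OF i, of T] by blast
    have "enabled n tr (st t) (Call i undefined)" using i nf same[OF t(1)] idle by (simp add: enabled_def)
    have mem: "Call i undefined \<in> {Call i m | m. True}" by blast
    have ni: "ev t \<notin> {Call i m | m. True}" using noinc[OF t(1)] by simp
    show False
    proof (cases "ev t \<in> {Call i m | m. True}")
      case True then show False using ni by simp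
    next
      case False
      then have "\<forall>e\<in>{Call i m | m. True}. \<not> enabled n tr (st t) e" using t(2) by simp
      then show False using mem \<open>enabled n tr (st t) (Call i undefined)\<close> by simp
    qed
  qed
  have cd: "card (cur_R (nd (st t) i)) < tr" if "T \<le> t" for t
  proof (rule ccontr)
    assume "\<not> card (cur_R (nd (st t) i)) < tr"
    then have c: "tr \<le> card (cur_R (nd (st t) i))" by simp
    have en: "enabled n tr (st t') (Complete i)" if "t \<le> t'" for t'
    proof -
      have l: "len (nd (st t') i) = len (nd (st t) i)" using same[of t] same[of t'] that \<open>T \<le> t\<close> by simp
      have "cur_R (nd (st t) i) \<subseteq> cur_R (nd (st t') i)" using Rv_mono[OF RUN that] l by (simp add: cur_R_def)
      then have "card (cur_R (nd (st t) i)) \<le> card (cur_R (nd (st t') i))"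
        unfolding cur_R_def by (rule card_mono[OF PInv_fin[OF P_run[OF RUN]]])
      then show ?thesis using c i nf same[of t'] nI that \<open>T \<le> t\<close> by (simp add: enabled_def)
    qed
    obtain t' where t': "t' \<ge> t" "\<not> enabled n tr (st t') (Complete i) \<or> ev t' = Complete i"
      using fair_complete[OF i, of t] by blast
    have "enabled n tr (st t') (Complete i)" by (rule en[OF t'(1)])
    moreover have "ev t' \<noteq> Complete i" using noinc[of t'] t'(1) \<open>T \<le> t\<close> by simp
    ultimately show False using t'(2) by simp
  qed
  have "\<forall>t\<ge>T. ph (nd (st t) i) \<noteq> Idle \<and> card (cur_R (nd (st t) i)) < tr \<and> len (nd (st t) i) = len (nd (st T) i)"
  proof (intro allI impI conjI)
    fix t assume "T \<le> t"
    show "ph (nd (st t) i) \<noteq> Idle" using same[OF \<open>T \<le> t\<close>] nI by simp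
    show "card (cur_R (nd (st t) i)) < tr" by (rule cd[OF \<open>T \<le> t\<close>])
    show "len (nd (st t) i) = len (nd (st T) i)" using same[OF \<open>T \<le> t\<close>] by simp
  qed
  then show ?thesis by blast
qed

end

definition pj :: "(nat \<Rightarrow> 'm gstate) \<Rightarrow> nat \<Rightarrow> nat \<Rightarrow> nat \<Rightarrow> nat" where
  "pj st j i t = len (nd (st t) j) - length (chan (st t) j i)"

lemma len_Recv: "len (nd (gstep n ts g (Recv a b)) k) = len (nd g k)"
  by (simp add: nd_Recv)

context
  fixes n tr ts :: nat and st :: "nat \<Rightarrow> 'm gstate" and ev :: "nat \<Rightarrow> 'm event"
  assumes RUN: "run n tr ts st ev"
begin

lemma pj_suc: "i \<in> {1..n} \<Longrightarrow> j \<in> {1..n} \<Longrightarrow> pj st j i (Suc t) = pj st j i t + (if ev t = Recv i j then 1 else 0)"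
  unfolding pj_def using pchan_step[OF Inv_run[OF RUN] run_en[OF RUN], of i j t] run_step[OF RUN, of t] by simp

lemma pj_mono: assumes "i \<in> {1..n}" "j \<in> {1..n}" "t \<le> t'" shows "pj st j i t \<le> pj st j i t'"
  using assms(3)
proof (induction t' rule: dec_induct)
  case base then show ?case by simp
next
  case (step m) then show ?case using pj_suc[OF assms(1,2), of m] by simp
qed

lemma pj_inv:
  assumes ij: "i \<in> {1..n}" "j \<in> {1..n}"
  shows "1 \<le> pj st j i t \<and> pj st j i t \<le> len (nd (st t) j) \<and>
    chan (st t) j i = map (msg j (nd (st t) j)) [Suc (pj st j i t)..<Suc (len (nd (st t) j))] \<and>
    (pj st j i t \<le> len (nd (st t) i) \<or> (pj st j i t = Suc (len (nd (st t) i)) \<and> tr \<le> card (Rv (nd (st t) i) (len (nd (st t) i)))))"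
proof -
  obtain p where p: "1 \<le> p" "p \<le> len (nd (st t) j)" "chan (st t) j i = map (msg j (nd (st t) j)) [Suc p..<Suc (len (nd (st t) j))]"
    "p \<le> len (nd (st t) i) \<or> (p = Suc (len (nd (st t) i)) \<and> tr \<le> card (Rv (nd (st t) i) (len (nd (st t) i))))"
    using CInvD[OF C_run[OF RUN] ij] by metis
  have "pj st j i t = p" unfolding pj_def using p(2,3) by simp
  then show ?thesis using p by simp
qed

end

context
  fixes n tr ts :: nat and st :: "nat \<Rightarrow> 'm gstate" and ev :: "nat \<Rightarrow> 'm event"
  assumes RUN: "run n tr ts st ev" and FAIR: "fair n tr st ev"
begin

lemma proc_k:
  assumes ij: "i \<in> {1..n}" "j \<in> {1..n}"
    and H: "\<forall>t\<ge>T. \<not> crashed (nd (st t) i) \<and> ph (nd (st t) i) \<noteq> Idle \<and> card (cur_R (nd (st t) i)) < tr"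
  shows "T \<le> t \<Longrightarrow> \<exists>t'\<ge>t. min (len (nd (st t) j)) (pj st j i t + k) \<le> pj st j i t'"
proof (induction k arbitrary: t)
  case 0 then show ?case by auto
next
  case (Suc k)
  show ?case
  proof (cases "len (nd (st t) j) \<le> pj st j i t")
    case True then show ?thesis by (intro exI[of _ t]) auto
  next
    case False
    obtain t1 where t1: "t1 \<ge> t" "\<not> enabled n tr (st t1) (Recv i j) \<or> ev t1 = Recv i j"
      using fair_recv[OF RUN FAIR ij, of t] by blast
    have "\<exists>t2\<ge>t. Suc (pj st j i t) \<le> pj st j i t2"
    proof (cases "ev t1 = Recv i j")
      case True
      have "pj st j i t \<le> pj st j i t1" by (rule pj_mono[OF RUN ij t1(1)])
      then show ?thesis using pj_suc[OF RUN ij, of t1] True t1(1) by (intro exI[of _ "Suc t1"]) auto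
    next
      case False
      then have ne: "\<not> enabled n tr (st t1) (Recv i j)" using t1(2) by simp
      have "T \<le> t1" using Suc.prems t1(1) by simp
      then have "chan (st t1) j i = []" using ne H ij by (simp add: enabled_def)
      then have "pj st j i t1 = len (nd (st t1) j)" by (simp add: pj_def)
      moreover have "len (nd (st t) j) \<le> len (nd (st t1) j)" by (rule len_mono[OF RUN t1(1)])
      ultimately show ?thesis using False \<open>\<not> len (nd (st t) j) \<le> pj st j i t\<close> t1(1) by (intro exI[of _ t1]) auto
    qed
    then obtain t2 where t2: "t2 \<ge> t" "Suc (pj st j i t) \<le> pj st j i t2" by blast
    obtain t' where t': "t' \<ge> t2" "min (len (nd (st t2) j)) (pj st j i t2 + k) \<le> pj st j i t'"
      using Suc.IH[of t2] Suc.prems t2(1) by auto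
    have "len (nd (st t) j) \<le> len (nd (st t2) j)" by (rule len_mono[OF RUN t2(1)])
    then have "min (len (nd (st t) j)) (pj st j i t + Suc k) \<le> pj st j i t'" using t' t2 by linarith
    then show ?thesis using t' t2 by (intro exI[of _ t']) auto
  qed
qed

lemma proc:
  assumes ij: "i \<in> {1..n}" "j \<in> {1..n}"
    and H: "\<forall>t\<ge>T. \<not> crashed (nd (st t) i) \<and> ph (nd (st t) i) \<noteq> Idle \<and> card (cur_R (nd (st t) i)) < tr"
    and t: "T \<le> t"
  shows "\<exists>t'\<ge>t. len (nd (st t) j) \<le> pj st j i t'"
  using proc_k[OF ij H t, of "len (nd (st t) j)"] by auto

end

context
  fixes n tr ts :: nat and st :: "nat \<Rightarrow> 'm gstate" and ev :: "nat \<Rightarrow> 'm event"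
  assumes RUN: "run n tr ts st ev" and FAIR: "fair n tr st ev"
begin

lemma len0: "len (nd (st 0) k) = 1"
  using RUN by (simp add: run_def init_state_def init_node_def)

lemma live:
  assumes trpos: "0 < tr" and NFc: "tr \<le> card {i \<in> {1..n}. \<forall>t. \<not> crashed (nd (st t) i)}"
  shows "\<forall>i\<in>{1..n}. (\<forall>t. \<not> crashed (nd (st t) i)) \<longrightarrow> (\<exists>t. L \<le> len (nd (st t) i))"
proof (induction L)
  case 0 then show ?case by simp
next
  case (Suc L)
  define NF where "NF = {i \<in> {1..n}. \<forall>t. \<not> crashed (nd (st t) i)}"
  have IH: "\<And>j. j \<in> NF \<Longrightarrow> \<exists>t. L \<le> len (nd (st t) j)" using Suc.IH unfolding NF_def by blast
  show ?case
  proof (rule ccontr)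
    assume "\<not> ?case"
    then obtain i0 where i0: "i0 \<in> {1..n}" "\<forall>t. \<not> crashed (nd (st t) i0)" "\<forall>t. len (nd (st t) i0) \<le> L"
      by (meson not_less_eq_eq)
    have Bcase: "\<forall>j\<in>{1..n}. \<forall>t. len (nd (st t) j) \<le> L"
    proof (rule ccontr)
      assume "\<not> (\<forall>j\<in>{1..n}. \<forall>t. len (nd (st t) j) \<le> L)"
      then obtain j tj where j: "j \<in> {1..n}" "Suc L \<le> len (nd (st tj) j)" by (meson not_less_eq_eq)
      obtain T0 where T0: "\<forall>t\<ge>T0. ph (nd (st t) i0) \<noteq> Idle \<and> card (cur_R (nd (st t) i0)) < tr \<and> len (nd (st t) i0) = len (nd (st T0) i0)"
        using stuck[OF RUN FAIR i0] by blast
      have H: "\<forall>t\<ge>T0. \<not> crashed (nd (st t) i0) \<and> ph (nd (st t) i0) \<noteq> Idle \<and> card (cur_R (nd (st t) i0)) < tr"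
        using T0 i0(2) by blast
      define t where "t = max T0 tj"
      obtain t' where t': "t' \<ge> t" "len (nd (st t) j) \<le> pj st j i0 t'"
        using proc[OF RUN FAIR i0(1) j(1) H, of t] unfolding t_def by auto
      have "len (nd (st tj) j) \<le> len (nd (st t) j)" by (rule len_mono[OF RUN]) (simp add: t_def)
      then have big: "Suc L \<le> pj st j i0 t'" using j(2) t'(2) by simp
      have "T0 \<le> t'" using t'(1) unfolding t_def by simp
      then have c: "card (Rv (nd (st t') i0) (len (nd (st t') i0))) < tr" using H by (simp add: cur_R_def)
      have "pj st j i0 t' \<le> len (nd (st t') i0) \<or> (pj st j i0 t' = Suc (len (nd (st t') i0)) \<and> tr \<le> card (Rv (nd (st t') i0) (len (nd (st t') i0))))"
        using pj_inv[OF RUN i0(1) j(1), of t'] by blast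
      then have "pj st j i0 t' \<le> len (nd (st t') i0)" using c by auto
      then show False using big i0(3) by (metis not_less_eq_eq order_trans)
    qed
    have finNF: "finite NF" unfolding NF_def by simp
    have "0 < card NF" using NFc trpos unfolding NF_def by linarith
    then have neNF: "NF \<noteq> {}" by (metis card.empty less_irrefl)
    define Tf where "Tf j = (LEAST t. L \<le> len (nd (st t) j))" for j
    have TfL: "L \<le> len (nd (st (Tf j)) j)" if "j \<in> NF" for j
      using IH[OF that] unfolding Tf_def by (metis LeastI)
    obtain i where i: "i \<in> NF" "\<forall>j\<in>NF. Tf i \<le> Tf j"
    proof -
      have "Min (Tf ` NF) \<in> Tf ` NF" using finNF neNF by simp
      then obtain i where "i \<in> NF" "Tf i = Min (Tf ` NF)" by auto
      moreover have "\<forall>j\<in>NF. Min (Tf ` NF) \<le> Tf j" using finNF by simp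
      ultimately show ?thesis using that by auto
    qed
    have i1: "i \<in> {1..n}" "\<forall>t. \<not> crashed (nd (st t) i)" using i(1) unfolding NF_def by auto
    have ibd: "\<forall>t. len (nd (st t) i) \<le> L" using Bcase i1(1) by blast
    obtain T0 where T0: "\<forall>t\<ge>T0. ph (nd (st t) i) \<noteq> Idle \<and> card (cur_R (nd (st t) i)) < tr \<and> len (nd (st t) i) = len (nd (st T0) i)"
      using stuck[OF RUN FAIR i1 ibd] by blast
    have H: "\<forall>t\<ge>T0. \<not> crashed (nd (st t) i) \<and> ph (nd (st t) i) \<noteq> Idle \<and> card (cur_R (nd (st t) i)) < tr"
      using T0 i1(2) by blast
    have leni: "len (nd (st t) i) = L" if "Tf i \<le> t" for t
      using len_mono[OF RUN that, of i] TfL[OF i(1)] ibd[rule_format, of t] by linarith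
    have L2: "2 \<le> L"
    proof -
      have "ph (nd (st (max T0 (Tf i))) i) \<noteq> Idle" using H by simp
      then have "2 \<le> len (nd (st (max T0 (Tf i))) i)" using NInv_nidle[OF N_run[OF RUN]] by blast
      then show ?thesis using leni[of "max T0 (Tf i)"] by simp
    qed
    have got: "\<exists>t. j \<in> fst ` Rv (nd (st t) i) L" if jNF: "j \<in> NF" for j
    proof -
      have j1: "j \<in> {1..n}" using jNF unfolding NF_def by simp
      have Tij: "Tf i \<le> Tf j" using i(2) jNF by blast
      have "Tf j \<noteq> 0"
      proof
        assume "Tf j = 0"
        then show False using TfL[OF jNF] len0[of j] L2 by simp
      qed
      then obtain T' where T': "Tf j = Suc T'" by (cases "Tf j") auto
      have "T' < Tf j" using T' by simp
      then have lT': "\<not> L \<le> len (nd (st T') j)" unfolding Tf_def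
        by (rule not_less_Least[of T' "\<lambda>t. L \<le> len (nd (st t) j)"])
      have "ev T' \<noteq> Recv i j"
      proof
        assume "ev T' = Recv i j"
        then have "len (nd (st (Suc T')) j) = len (nd (st T') j)" using run_step[OF RUN, of T'] len_Recv by metis
        then show False using TfL[OF jNF] T' lT' by simp
      qed
      then have "pj st j i (Tf j) = pj st j i T'" using pj_suc[OF RUN i1(1) j1, of T'] T' by simp
      moreover have "pj st j i T' \<le> len (nd (st T') j)" using pj_inv[OF RUN i1(1) j1, of T'] by blast
      ultimately have pa: "pj st j i (Tf j) \<le> L - 1" using lT' by simp
      define t where "t = max T0 (Tf j)"
      obtain t' where t': "t' \<ge> t" "len (nd (st t) j) \<le> pj st j i t'"
        using proc[OF RUN FAIR i1(1) j1 H, of t] unfolding t_def by auto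
      have "len (nd (st (Tf j)) j) \<le> len (nd (st t) j)" by (rule len_mono[OF RUN]) (simp add: t_def)
      then have pb: "L - 1 < pj st j i t'" using TfL[OF jNF] t'(2) L2 by simp
      have "\<exists>tc. Tf j \<le> tc \<and> tc < t' \<and> pj st j i tc = L - 1 \<and> pj st j i (Suc tc) = Suc (L - 1)"
      proof (rule ivt_nat[where f = "pj st j i", OF _ pa pb])
        show "\<And>t. pj st j i (Suc t) \<le> Suc (pj st j i t)" using pj_suc[OF RUN i1(1) j1] by simp
        show "Tf j \<le> t'" using t'(1) unfolding t_def by simp
      qed
      then obtain tc where tc: "Tf j \<le> tc" "pj st j i tc = L - 1" "pj st j i (Suc tc) = L" using L2 by auto
      have evtc: "ev tc = Recv i j" using pj_suc[OF RUN i1(1) j1, of tc] tc L2 by (auto split: if_splits)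
      have lj: "len (nd (st (Suc tc)) j) = len (nd (st tc) j)" using run_step[OF RUN, of tc] evtc len_Recv by metis
      have "pj st j i (Suc tc) \<le> len (nd (st (Suc tc)) j)" using pj_inv[OF RUN i1(1) j1, of "Suc tc"] by blast
      then have Llj: "L \<le> len (nd (st tc) j)" using tc(3) lj by simp
      have ch: "chan (st tc) j i = map (msg j (nd (st tc) j)) [Suc (L - 1)..<Suc (len (nd (st tc) j))]"
        using pj_inv[OF RUN i1(1) j1, of tc] tc(2) by simp
      have "[Suc (L - 1)..<Suc (len (nd (st tc) j))] = L # [Suc L..<Suc (len (nd (st tc) j))]"
        using Llj L2 by (simp add: upt_conv_Cons)
      then have hd: "hd (chan (st tc) j i) = (j, pay (nd (st tc) j) L, L, Rv (nd (st tc) j) (L - 1))"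
        using ch by (simp add: msg_def)
      have li: "len (nd (st tc) i) = L" using leni Tij tc(1) by simp
      have "nd (st (Suc tc)) i = recv_update (hd (chan (st tc) j i)) (nd (st tc) i)"
        using run_step[OF RUN, of tc] evtc by (simp add: nd_Recv)
      then have "(j, pay (nd (st tc) j) L) \<in> Rv (nd (st (Suc tc)) i) L" using hd li by (simp add: ru_Rv)
      then show ?thesis by force
    qed
    then obtain h where h: "\<forall>j\<in>NF. j \<in> fst ` Rv (nd (st (h j)) i) L" by metis
    define B where "B = Max (h ` NF) + T0 + Tf i"
    have hB: "h j \<le> B" if "j \<in> NF" for j
    proof -
      have "h j \<le> Max (h ` NF)" using finNF that by simp
      then show ?thesis unfolding B_def by simp
    qed
    have sub: "NF \<subseteq> fst ` Rv (nd (st B) i) L"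
    proof
      fix j assume "j \<in> NF"
      then show "j \<in> fst ` Rv (nd (st B) i) L" using h Rv_mono[OF RUN hB[OF \<open>j \<in> NF\<close>], of i L] by blast
    qed
    have "card NF \<le> card (fst ` Rv (nd (st B) i) L)"
      by (rule card_mono[OF _ sub]) (simp add: PInv_fin[OF P_run[OF RUN]])
    also have "\<dots> = card (Rv (nd (st B) i) L)" by (rule PInv_card[OF P_run[OF RUN]])
    finally have "tr \<le> card (cur_R (nd (st B) i))" using NFc leni[of B] unfolding NF_def B_def cur_R_def by simp
    moreover have "card (cur_R (nd (st B) i)) < tr" using H unfolding B_def by simp
    ultimately show False by simp
  qed
qed

end

theorem theorem3:
  fixes n f tr ts tb :: nat
    and st :: "nat \<Rightarrow> 'm gstate" and ev :: "nat \<Rightarrow> 'm event"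
  assumes "0 < tr" and "tr \<le> n - f"
    and "0 < ts" and "ts \<le> tr"
    and "0 < tb"
    and "real tb \<le> real n - real tr * (real n - real tr) / (real tr - real ts + 1)"
    and "run n tr ts st ev" and "fair n tr st ev"
    and "card {i \<in> {1..n}. failed st i} \<le> f"
  shows "TSB n tr tb ts st"
proof -
  note RUN = assms(7) and FAIR = assms(8)
  have trn: "tr \<le> n" using assms(2) by simp
  have NFc: "tr \<le> card {i \<in> {1..n}. \<forall>t. \<not> crashed (nd (st t) i)}"
  proof -
    have e: "{i \<in> {1..n}. \<forall>t. \<not> crashed (nd (st t) i)} = {1..n} - {i \<in> {1..n}. failed st i}"
      unfolding failed_def by auto
    have "card ({1..n} - {i \<in> {1..n}. failed st i}) = n - card {i \<in> {1..n}. failed st i}"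
      by (subst card_Diff_subset) auto
    then show ?thesis using e assms(2,9) by simp
  qed
  have lock: "\<forall>i\<in>{1..n}. \<forall>s. called st i s \<longrightarrow> (\<exists>R B. returns st i s R B) \<or> failed st i"
  proof (intro ballI allI impI)
    fix i s assume i: "i \<in> {1..n}" and c: "called st i s"
    show "(\<exists>R B. returns st i s R B) \<or> failed st i"
    proof (cases "failed st i")
      case True then show ?thesis by simp
    next
      case False
      then have nc: "\<forall>t. \<not> crashed (nd (st t) i)" unfolding failed_def by simp
      obtain m t0 where "inp (nd (st t0) i) s = Some m" using c unfolding called_def bcast_def by blast
      then have s1: "1 \<le> s" using NInvD(2)[OF N_run[OF RUN, of t0 i], of s] by auto
      obtain t where t: "2 * s + 2 \<le> len (nd (st t) i)"
        using live[OF RUN FAIR assms(1) NFc, of "2 * s + 2"] i nc by blast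
      have "s < kstep (nd (st t) i)" using t NInv_len[OF N_run[OF RUN, of t i]] by simp
      then have "out (nd (st t) i) s \<noteq> None" using NInvD(3)[OF N_run[OF RUN, of t i], of s] s1 by simp
      then obtain R B where "out (nd (st t) i) s = Some (R, B)" by auto
      then show ?thesis unfolding returns_def by blast
    qed
  qed
  show ?thesis unfolding TSB_def
  proof (intro conjI)
    show "\<forall>i\<in>{1..n}. \<forall>s. called st i s \<longrightarrow> (\<exists>R B. returns st i s R B) \<or> failed st i" by (rule lock)
    show "\<forall>i s R B. returns st i s R B \<longrightarrow> (\<exists>NR\<subseteq>{1..n}. tr \<le> card NR \<and> (\<forall>j\<in>NR. called st j s) \<and> R = msgs_of st NR s)"
      using receive_thr[OF RUN] by blast
    show "\<forall>i s R B. returns st i s R B \<longrightarrow> (\<exists>NB\<subseteq>{1..n}. tb \<le> card NB \<and> (\<forall>j\<in>NB. called st j s) \<and> B = msgs_of st NB s)"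
      using broadcast_thr[OF RUN _ _ assms(4) trn assms(6)] assms(3) by (metis One_nat_def Suc_leI)
    show "\<forall>i s R B x. returns st i s R B \<and> x \<in> B \<longrightarrow> (\<exists>NS\<subseteq>{1..n}. ts \<le> card NS \<and> (\<forall>j\<in>NS. would_receive n tr ts st j s x))"
      using spread_thr[OF RUN] by blast
  qed
qed

end
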